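(* Let $b:\mathbb{D}\to\mathbb{D}$ be analytic with zero sequence $(a_n)_n$ and singular inner factor $S_\nu$, let $\Omega$ be an approach region at $1$ and $m\ge0$ an integer, and assume \[\sup_{z\in\Omega}\ \sum_n\frac{1-|a_n|^2}{|1-\overline{a_n}z|^{2m+2}}+\int_{\mathbb{T}}\frac{d\nu(\zeta)}{|1-\overline{\zeta}z|^{2m+2}}+\int_{\mathbb{T}}\frac{-\log|b(\zeta)|}{|1-\overline{\zeta}z|^{2m+2}}\,dm(\zeta)<\infty.\] If $\overline{\partial_z}^m k^b_z\to\overline{\partial_z}^m k^b_1$ in the norm of $\mathcal{H}(b)$ as $z\to1$ in $\Omega$, then for every $0\le j<m$ we also have $\overline{\partial_z}^j k^b_z\to\overline{\partial_z}^j k^b_1$ in norm as $z\to1$ in $\Omega$.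
   Context: $\mathbb{D}$ unit disk, $\mathbb{T}$ unit circle, $m$ (as measure) normalized Lebesgue measure on $\mathbb{T}$; $S_\nu(z)=\exp(-\int_{\mathbb{T}}\frac{\zeta+z}{\zeta-z}d\nu(\zeta))$. $\mathcal{H}(b)$ is the reproducing kernel Hilbert space with kernel $k^b_z(w)=\frac{1-\overline{b(z)}b(w)}{1-\overline{z}w}$; $\overline{\partial_z}^j k^b_z$ is the $j$-th $\bar z$-derivative of $z\mapsto k^b_z$, with $\langle f,\overline{\partial_z}^j k^b_z\rangle_b=f^{(j)}(z)$. Under the hypothesis, for each $j\le m$, $\overline{\partial_z}^j k^b_z$ converges weakly as $z\to1$ in $\Omega$; its weak limit is denoted $\overline{\partial_z}^j k^b_1$. An approach region at $1$ is an open simply connected $\Omega\subset\mathbb{D}$ with $\partial\Omega\cap\mathbb{T}=\{1\}$ such that for $z\in\Omega$ close to $1$ the segment $[z,1]\subset\Omega$. *)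

theory Defs
  imports "HOL-Complex_Analysis.Complex_Analysis"
begin

abbreviation disk :: "complex set" where "disk \<equiv> ball 0 1"

definition circle_meas :: "complex measure" where
  "circle_meas = distr (density (lebesgue_on {0..<2*pi}) (\<lambda>_. ennreal (1/(2*pi)))) borel (\<lambda>t. cis t)"

definition bdry :: "(complex \<Rightarrow> complex) \<Rightarrow> complex \<Rightarrow> complex" where
  "bdry b \<zeta> = Lim (at_left (1::real)) (\<lambda>r. b (of_real r * \<zeta>))"

definition blaschke_factor :: "complex \<Rightarrow> complex \<Rightarrow> complex" where
  "blaschke_factor \<alpha> z = (if \<alpha> = 0 then z else (of_real (norm \<alpha>) / \<alpha>) * (\<alpha> - z) / (1 - cnj \<alpha> * z))"

text \<open>Blaschke product of the zero sequence a_n, n < N (N = \<infinity> for infinitely many zeros).\<close>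
definition blaschke :: "enat \<Rightarrow> (nat \<Rightarrow> complex) \<Rightarrow> complex \<Rightarrow> complex" where
  "blaschke N a z = prodinf (\<lambda>n. if enat n < N then blaschke_factor (a n) z else 1)"

definition sing_inner :: "complex measure \<Rightarrow> complex \<Rightarrow> complex" where
  "sing_inner \<nu> z = exp (- (\<integral>\<zeta>. (\<zeta> + z) / (\<zeta> - z) \<partial>\<nu>))"

definition outer_part :: "(complex \<Rightarrow> complex) \<Rightarrow> complex \<Rightarrow> complex" where
  "outer_part b z = exp (\<integral>\<zeta>. (\<zeta> + z) / (\<zeta> - z) * of_real (ln (norm (bdry b \<zeta>))) \<partial>circle_meas)"

definition is_zero_seq :: "(complex \<Rightarrow> complex) \<Rightarrow> enat \<Rightarrow> (nat \<Rightarrow> complex) \<Rightarrow> bool" where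
  "is_zero_seq b N a \<longleftrightarrow>
     (\<forall>n. enat n < N \<longrightarrow> a n \<in> disk) \<and>
     (\<forall>w\<in>disk. finite {n. enat n < N \<and> a n = w} \<and>
                 int (card {n. enat n < N \<and> a n = w}) = (if b w = 0 then zorder b w else 0))"

definition is_sing_inner_factor ::
  "(complex \<Rightarrow> complex) \<Rightarrow> enat \<Rightarrow> (nat \<Rightarrow> complex) \<Rightarrow> complex measure \<Rightarrow> bool" where
  "is_sing_inner_factor b N a \<nu> \<longleftrightarrow>
     finite_measure \<nu> \<and> sets \<nu> = sets borel \<and> emeasure \<nu> (- sphere 0 1) = 0 \<and>
     (\<exists>A \<in> sets borel. emeasure \<nu> (- A) = 0 \<and> emeasure circle_meas A = 0) \<and>
     (\<exists>c. norm c = 1 \<and>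
        (\<forall>z\<in>disk. b z = c * blaschke N a z * sing_inner \<nu> z * outer_part b z))"

definition approach_region :: "complex set \<Rightarrow> bool" where
  "approach_region \<Omega> \<longleftrightarrow> open \<Omega> \<and> simply_connected \<Omega> \<and> \<Omega> \<noteq> {} \<and> \<Omega> \<subseteq> disk \<and>
     frontier \<Omega> \<inter> sphere 0 1 = {1} \<and>
     (\<exists>\<delta>>0. \<forall>z\<in>\<Omega>. norm (z - 1) < \<delta> \<longrightarrow> closed_segment z 1 - {1} \<subseteq> \<Omega>)"

text \<open>Reproducing kernel: kb b z w = k^b_z(w).\<close>
definition kb :: "(complex \<Rightarrow> complex) \<Rightarrow> complex \<Rightarrow> complex \<Rightarrow> complex" where
  "kb b z w = (1 - cnj (b z) * b w) / (1 - cnj z * w)"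

text \<open>Norm in H(b) of a function f on the disk (the RKHS norm; \<infinity> iff f is not in H(b)):
  the norm of the (conjugate-linear) functional  sum c_i k_{z_i}  \<mapsto>  <f, sum c_i k_{z_i}>
  on the dense span of kernel functions.\<close>
definition hb_norm :: "(complex \<Rightarrow> complex) \<Rightarrow> (complex \<Rightarrow> complex) \<Rightarrow> ennreal" where
  "hb_norm b f = (SUP p \<in> {(n::nat, c::nat\<Rightarrow>complex, z::nat\<Rightarrow>complex). (\<forall>i<n. z i \<in> disk) \<and>
        Re (\<Sum>i<n. \<Sum>j<n. c i * cnj (c j) * kb b (z i) (z j)) \<le> 1}.
      (case p of (n, c, z) \<Rightarrow> ennreal (norm (\<Sum>i<n. cnj (c i) * f (z i)))))"

text \<open>The j-th conj(z)-derivative of z \<mapsto> k^b_z, evaluated at w.\<close>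
definition dk :: "(complex \<Rightarrow> complex) \<Rightarrow> nat \<Rightarrow> complex \<Rightarrow> complex \<Rightarrow> complex" where
  "dk b j z w = cnj ((deriv ^^ j) (\<lambda>\<zeta>. (1 - b \<zeta> * cnj (b w)) / (1 - \<zeta> * cnj w)) z)"

text \<open>The weak limit of dk b j z as z \<rightarrow> 1 in \<Omega>; a weak limit in an RKHS is the pointwise limit.\<close>
definition dk1 :: "(complex \<Rightarrow> complex) \<Rightarrow> complex set \<Rightarrow> nat \<Rightarrow> complex \<Rightarrow> complex" where
  "dk1 b \<Omega> j w = Lim (at 1 within \<Omega>) (\<lambda>z. dk b j z w)"

end

theory Submission
  imports Defs "HOL-Computational_Algebra.Polynomial"
begin

definition adm :: "(complex \<Rightarrow> complex) \<Rightarrow> nat \<Rightarrow> (nat \<Rightarrow> complex) \<Rightarrow> (nat \<Rightarrow> complex) \<Rightarrow> bool" where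
  "adm b n c z \<longleftrightarrow> (\<forall>i<n. z i \<in> disk) \<and> Re (\<Sum>i<n. \<Sum>j<n. c i * cnj (c j) * kb b (z i) (z j)) \<le> 1"

definition pairing :: "nat \<Rightarrow> (nat \<Rightarrow> complex) \<Rightarrow> (nat \<Rightarrow> complex) \<Rightarrow> (complex \<Rightarrow> complex) \<Rightarrow> complex" where
  "pairing n c z f = (\<Sum>i<n. cnj (c i) * f (z i))"

lemma hb_norm_alt: "hb_norm b f = (SUP p \<in> {(n, c, z). adm b n c z}. (case p of (n, c, z) \<Rightarrow> ennreal (norm (pairing n c z f))))"
  unfolding hb_norm_def adm_def pairing_def by simp

lemma hb_norm_ge: "adm b n c z \<Longrightarrow> ennreal (norm (pairing n c z f)) \<le> hb_norm b f"
  unfolding hb_norm_alt by (rule SUP_upper2[of "(n,c,z)"]) auto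

lemma hb_norm_le: "(\<And>n c z. adm b n c z \<Longrightarrow> norm (pairing n c z f) \<le> C) \<Longrightarrow> hb_norm b f \<le> ennreal C"
  unfolding hb_norm_alt by (rule SUP_least) (auto intro: ennreal_leI)

lemma pairing_add: "pairing n c z (\<lambda>w. f w + g w) = pairing n c z f + pairing n c z g"
  unfolding pairing_def by (simp add: algebra_simps sum.distrib)

lemma pairing_diff: "pairing n c z (\<lambda>w. f w - g w) = pairing n c z f - pairing n c z g"
  unfolding pairing_def by (simp add: algebra_simps sum_subtractf)

lemma hb_norm_diff_le: "hb_norm b (\<lambda>w. f w - g w) \<le> hb_norm b f + hb_norm b g"
  unfolding hb_norm_alt[of b "\<lambda>w. f w - g w"]
proof (rule SUP_least)
  fix p assume a: "p \<in> {(n, c, z). adm b n c z}"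
  then obtain n c z where p: "p = (n,c,z)" and "adm b n c z" by auto
  have "ennreal (norm (pairing n c z (\<lambda>w. f w - g w))) \<le> ennreal (norm (pairing n c z f) + norm (pairing n c z g))"
    unfolding pairing_diff by (intro ennreal_leI norm_triangle_ineq4)
  also have "\<dots> = ennreal (norm (pairing n c z f)) + ennreal (norm (pairing n c z g))"
    by (simp add: ennreal_plus)
  also have "\<dots> \<le> hb_norm b f + hb_norm b g"
    using hb_norm_ge[OF \<open>adm b n c z\<close>] by (intro add_mono) auto
  finally show "(case p of (n, c, z) \<Rightarrow> ennreal (norm (pairing n c z (\<lambda>w. f w - g w)))) \<le> hb_norm b f + hb_norm b g" by (simp add: p)
qed

lemma hb_norm_triangle: "hb_norm b (\<lambda>w. f w - h w) \<le> hb_norm b (\<lambda>w. f w - g w) + hb_norm b (\<lambda>w. g w - h w)"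
proof -
  have "hb_norm b (\<lambda>w. f w - h w) = hb_norm b (\<lambda>w. (f w - g w) - (h w - g w))" by simp
  also have "\<dots> \<le> hb_norm b (\<lambda>w. f w - g w) + hb_norm b (\<lambda>w. h w - g w)" by (rule hb_norm_diff_le)
  also have "hb_norm b (\<lambda>w. h w - g w) = hb_norm b (\<lambda>w. g w - h w)"
    unfolding hb_norm_alt pairing_diff by (simp add: norm_minus_commute)
  finally show ?thesis .
qed

lemma hb_norm_zero_fun: "hb_norm b (\<lambda>w. 0) = 0"
proof -
  have "hb_norm b (\<lambda>w. 0) \<le> ennreal 0" by (rule hb_norm_le) (simp add: pairing_def)
  then show ?thesis by simp
qed

lemma hb_norm_sub0: "hb_norm b (\<lambda>w. f w - 0) = hb_norm b f" by simp

definition gam :: "real \<Rightarrow> real \<Rightarrow> complex" where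
  "gam r t = of_real r * exp (2 * of_real pi * \<i> * of_real t)"

lemma gam_circ: "circlepath 0 r = gam r"
  unfolding circlepath gam_def by (simp add: fun_eq_iff)

lemma norm_gam: "0 \<le> r \<Longrightarrow> norm (gam r t) = r"
  unfolding gam_def by (simp add: norm_mult norm_exp_eq_Re)

lemma gam_cnj: "0 \<le> r \<Longrightarrow> cnj (gam r t) * gam r t = of_real (r^2)"
  by (metis complex_norm_square mult.commute norm_gam)

lemma repro:
  assumes "continuous_on (cball 0 r) f" "f holomorphic_on ball 0 r" "norm p < r"
  shows "((\<lambda>t. f (gam r t) * (gam r t / (gam r t - p))) has_integral f p) {0..1}"
proof -
  have "((\<lambda>u. f u/(u-p)) has_contour_integral (2 * of_real pi * \<i> * f p)) (circlepath 0 r)"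
    using Cauchy_integral_circlepath[of 0 r f p] assms by simp
  then have "((\<lambda>x. f (circlepath 0 r x)/(circlepath 0 r x - p) * vector_derivative (circlepath 0 r) (at x)) has_integral (2 * of_real pi * \<i> * f p)) {0..1}"
    unfolding has_contour_integral by simp
  then have "((\<lambda>t. f (gam r t)/(gam r t - p) * (2 * of_real pi * \<i> * gam r t)) has_integral (2 * of_real pi * \<i> * f p)) {0..1}"
    by (rule has_integral_eq[rotated]) (simp only: vector_derivative_circlepath, simp add: gam_circ gam_def)
  then have "((\<lambda>t. (f (gam r t)/(gam r t - p) * (2 * of_real pi * \<i> * gam r t)) * inverse (2 * of_real pi * \<i>)) has_integral (2 * of_real pi * \<i> * f p) * inverse (2 * of_real pi * \<i>)) {0..1}"
    by (rule has_integral_mult_left)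
  moreover have "2 * of_real pi * \<i> * f p * inverse (2 * of_real pi * \<i>) = f p"
    by (simp add: field_simps)
  ultimately have "((\<lambda>t. (f (gam r t)/(gam r t - p) * (2 * of_real pi * \<i> * gam r t)) * inverse (2 * of_real pi * \<i>)) has_integral f p) {0..1}"
    by simp
  then show ?thesis
    by (rule has_integral_eq[rotated]) (auto simp: field_simps)
qed

definition kr :: "real \<Rightarrow> complex \<Rightarrow> complex \<Rightarrow> complex" where
  "kr r p q = of_real (r^2) / (of_real (r^2) - cnj p * q)"

lemma kr_den_nz: assumes "0 < r" "norm p < r" "norm u \<le> r" shows "of_real (r^2) - cnj p * u \<noteq> 0"
proof
  assume "of_real (r^2) - cnj p * u = 0"
  then have "norm (cnj p * u) = r^2" by (metis eq_iff_diff_eq_0 norm_of_real abs_of_nonneg zero_le_power2)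
  moreover have "norm (cnj p * u) < r^2"
  proof -
    have "norm (cnj p * u) = norm p * norm u" by (simp add: norm_mult)
    also have "\<dots> \<le> norm p * r" using assms by (intro mult_left_mono) auto
    also have "\<dots> < r * r" using assms by (intro mult_strict_right_mono) auto
    finally show ?thesis by (simp add: power2_eq_square)
  qed
  ultimately show False by simp
qed

lemma kr_cnj: assumes "0 < r" "norm p < r" shows "cnj (gam r t / (gam r t - p)) = kr r p (gam r t)"
proof -
  let ?g = "gam r t"
  have ng: "norm ?g = r" using norm_gam assms by simp
  have g0: "?g \<noteq> 0" using ng assms by auto
  have cg: "cnj ?g = of_real (r^2) / ?g" using gam_cnj[of r t] g0 assms by (simp add: field_simps)
  have d: "?g - p \<noteq> 0" using ng assms by auto
  have d2: "of_real (r^2) - cnj p * ?g \<noteq> 0" using kr_den_nz[of r p ?g] ng assms by simp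
  have "cnj (?g / (?g - p)) = cnj ?g / (cnj ?g - cnj p)" by simp
  also have "\<dots> = (of_real (r^2) / ?g) / (of_real (r^2) / ?g - cnj p)" by (simp add: cg)
  also have "\<dots> = of_real (r^2) / (of_real (r^2) - cnj p * ?g)"
    using g0 d2 by (simp add: field_simps)
  finally show ?thesis unfolding kr_def .
qed

lemma kr_holo: assumes "0 < r" "norm p < r" shows "kr r p holomorphic_on ball 0 r" "continuous_on (cball 0 r) (kr r p)"
proof -
  have nz: "\<And>u. u \<in> cball 0 r \<Longrightarrow> of_real (r^2) - cnj p * u \<noteq> 0" using kr_den_nz assms by auto
  have "(\<lambda>u. of_real (r^2) / (of_real (r^2) - cnj p * u)) holomorphic_on ball 0 r"
    using nz by (intro holomorphic_intros) auto
  then show "kr r p holomorphic_on ball 0 r" unfolding kr_def[abs_def] by simp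
  have "continuous_on (cball 0 r) (\<lambda>u. of_real (r^2) / (of_real (r^2) - cnj p * u))"
    using nz by (intro continuous_intros) auto
  then show "continuous_on (cball 0 r) (kr r p)" unfolding kr_def[abs_def] by simp
qed

lemma pos_r:
  fixes n :: nat
  assumes b_hol: "b holomorphic_on disk" and b_self: "\<forall>z\<in>disk. b z \<in> disk"
    and r: "0 < r" "r < 1" and p: "\<forall>i<n. norm (p i) < r"
  shows "0 \<le> Re (\<Sum>i<n. \<Sum>j<n. v i * cnj (v j) * ((1 - cnj (b (p i)) * b (p j)) * kr r (p i) (p j)))"
proof -
  define A where "A u = (\<Sum>i<n. v i * kr r (p i) u)" for u
  define B where "B u = (\<Sum>i<n. v i * cnj (b (p i)) * kr r (p i) u)" for u
  define e where "e j t = gam r t / (gam r t - p j)" for j t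
  define g where "g t = gam r t" for t
  have sub: "cball 0 r \<subseteq> disk" using r by auto
  have bh: "b holomorphic_on ball 0 r" using b_hol by (rule holomorphic_on_subset) (use sub in auto)
  have bc: "continuous_on (cball 0 r) b" using holomorphic_on_imp_continuous_on[OF b_hol] sub
    by (rule continuous_on_subset)
  have holA: "A holomorphic_on ball 0 r" unfolding A_def[abs_def] using kr_holo p r
    by (intro holomorphic_intros) auto
  have contA: "continuous_on (cball 0 r) A" unfolding A_def[abs_def] using kr_holo p r
    by (intro continuous_intros) auto
  have holB: "B holomorphic_on ball 0 r" unfolding B_def[abs_def] using kr_holo p r
    by (intro holomorphic_intros) auto
  have contB: "continuous_on (cball 0 r) B" unfolding B_def[abs_def] using kr_holo p r
    by (intro continuous_intros) auto
  have holbB: "(\<lambda>u. b u * B u) holomorphic_on ball 0 r" using holB bh by (intro holomorphic_intros)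
  have contbB: "continuous_on (cball 0 r) (\<lambda>u. b u * B u)" using contB bc by (intro continuous_intros)
  have intA: "((\<lambda>t. A (g t) * e j t) has_integral A (p j)) {0..1}" if "j < n" for j
    unfolding g_def e_def by (rule repro[OF contA holA]) (use p that in auto)
  have intB: "((\<lambda>t. B (g t) * e j t) has_integral B (p j)) {0..1}" if "j < n" for j
    unfolding g_def e_def by (rule repro[OF contB holB]) (use p that in auto)
  have intbB: "((\<lambda>t. b (g t) * B (g t) * e j t) has_integral (b (p j) * B (p j))) {0..1}" if "j < n" for j
    unfolding g_def e_def by (rule repro[OF contbB holbB]) (use p that in auto)
  have cnjkr: "cnj (kr r (p i) (g t)) = e i t" if "i < n" for i t
    using kr_cnj[of r "p i" t] p that r unfolding g_def e_def by (metis complex_cnj_cnj)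
  have cA: "cnj (A (g t)) = (\<Sum>j<n. cnj (v j) * e j t)" for t
    unfolding A_def by (auto intro!: sum.cong simp: cnjkr)
  have cB: "cnj (B (g t)) = (\<Sum>j<n. cnj (v j) * b (p j) * e j t)" for t
    unfolding B_def by (auto intro!: sum.cong simp: cnjkr)
  define Q0 where "Q0 = (\<Sum>j<n. cnj (v j) * A (p j))"
  define Q1 where "Q1 = (\<Sum>j<n. cnj (v j) * (b (p j) * B (p j)))"
  have IA: "((\<lambda>t. A (g t) * cnj (A (g t))) has_integral Q0) {0..1}"
  proof -
    have "((\<lambda>t. \<Sum>j<n. cnj (v j) * (A (g t) * e j t)) has_integral Q0) {0..1}"
      unfolding Q0_def by (rule has_integral_sum) (auto intro!: has_integral_mult_right intA)
    then show ?thesis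
      by (rule has_integral_eq[rotated]) (simp add: cA sum_distrib_left mult_ac)
  qed
  have IB: "((\<lambda>t. B (g t) * cnj (B (g t))) has_integral Q1) {0..1}"
  proof -
    have "((\<lambda>t. \<Sum>j<n. cnj (v j) * (b (p j) * (B (g t) * e j t))) has_integral Q1) {0..1}"
      unfolding Q1_def by (rule has_integral_sum) (auto intro!: has_integral_mult_right intB)
    then show ?thesis
      by (rule has_integral_eq[rotated]) (simp add: cB sum_distrib_left mult_ac)
  qed
  have IC: "((\<lambda>t. b (g t) * B (g t) * cnj (A (g t))) has_integral Q1) {0..1}"
  proof -
    have "((\<lambda>t. \<Sum>j<n. cnj (v j) * (b (g t) * B (g t) * e j t)) has_integral Q1) {0..1}"
      unfolding Q1_def by (rule has_integral_sum) (auto intro!: has_integral_mult_right intbB)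
    then show ?thesis
      by (rule has_integral_eq[rotated]) (simp add: cA sum_distrib_left mult_ac)
  qed
  have ReA: "((\<lambda>t. Re (A (g t) * cnj (A (g t)))) has_integral Re Q0) {0..1}"
    using has_integral_linear[OF IA bounded_linear_Re] by (simp add: o_def)
  have ReB: "((\<lambda>t. Re (B (g t) * cnj (B (g t)))) has_integral Re Q1) {0..1}"
    using has_integral_linear[OF IB bounded_linear_Re] by (simp add: o_def)
  have ReC: "((\<lambda>t. Re (b (g t) * B (g t) * cnj (A (g t)))) has_integral Re Q1) {0..1}"
    using has_integral_linear[OF IC bounded_linear_Re] by (simp add: o_def)
  have ReAB: "((\<lambda>t. (Re (B (g t) * cnj (B (g t))) + Re (A (g t) * cnj (A (g t)))) / 2) has_integral (Re Q1 + Re Q0) / 2) {0..1}"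
    using has_integral_cmul[OF has_integral_add[OF ReB ReA], of "1/2"] by (simp add: divide_simps)
  have pw: "Re (b (g t) * B (g t) * cnj (A (g t))) \<le> (Re (B (g t) * cnj (B (g t))) + Re (A (g t) * cnj (A (g t)))) / 2" for t
  proof -
    have gd: "g t \<in> disk" unfolding g_def using norm_gam[of r t] r by auto
    then have nb: "norm (b (g t)) \<le> 1" using b_self by (simp add: dist_norm less_imp_le)
    let ?a = "norm (A (g t))" and ?b = "norm (B (g t))"
    have "Re (b (g t) * B (g t) * cnj (A (g t))) \<le> norm (b (g t) * B (g t) * cnj (A (g t)))" by (rule complex_Re_le_cmod)
    also have "\<dots> = norm (b (g t)) * (?b * ?a)" by (simp add: norm_mult)
    also have "\<dots> \<le> 1 * (?b * ?a)" by (intro mult_right_mono nb) auto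
    also have "\<dots> \<le> (?b^2 + ?a^2) / 2" using sum_squares_bound[of ?b ?a] by (simp add: power2_eq_square field_simps)
    also have "\<dots> = (Re (B (g t) * cnj (B (g t))) + Re (A (g t) * cnj (A (g t)))) / 2"
      by (simp add: complex_mult_cnj cmod_power2)
    finally show ?thesis .
  qed
  have "Re Q1 \<le> (Re Q1 + Re Q0) / 2"
    by (rule has_integral_le[OF ReC ReAB]) (rule pw)
  then have le: "Re Q1 \<le> Re Q0" by simp
  have eq: "(\<Sum>i<n. \<Sum>j<n. v i * cnj (v j) * ((1 - cnj (b (p i)) * b (p j)) * kr r (p i) (p j))) = Q0 - Q1"
  proof -
    define K where "K i j = kr r (p i) (p j)" for i j
    have "Q0 = (\<Sum>j<n. \<Sum>i<n. cnj (v j) * (v i * K i j))"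
      unfolding Q0_def A_def K_def by (simp add: sum_distrib_left)
    also have "\<dots> = (\<Sum>i<n. \<Sum>j<n. v i * cnj (v j) * K i j)"
      by (subst sum.swap) (simp add: mult_ac)
    finally have q0: "Q0 = (\<Sum>i<n. \<Sum>j<n. v i * cnj (v j) * K i j)" .
    have "Q1 = (\<Sum>j<n. \<Sum>i<n. cnj (v j) * (b (p j) * (v i * cnj (b (p i)) * K i j)))"
      unfolding Q1_def B_def K_def by (simp add: sum_distrib_left)
    also have "\<dots> = (\<Sum>i<n. \<Sum>j<n. v i * cnj (v j) * (cnj (b (p i)) * b (p j) * K i j))"
      by (subst sum.swap) (simp add: mult_ac)
    finally have q1: "Q1 = (\<Sum>i<n. \<Sum>j<n. v i * cnj (v j) * (cnj (b (p i)) * b (p j) * K i j))" .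
    have "Q0 - Q1 = (\<Sum>i<n. \<Sum>j<n. v i * cnj (v j) * K i j - v i * cnj (v j) * (cnj (b (p i)) * b (p j) * K i j))"
      unfolding q0 q1 by (simp add: sum_subtractf)
    also have "\<dots> = (\<Sum>i<n. \<Sum>j<n. v i * cnj (v j) * ((1 - cnj (b (p i)) * b (p j)) * kr r (p i) (p j)))"
      unfolding K_def by (intro sum.cong refl) (simp add: right_diff_distrib left_diff_distrib)
    finally show ?thesis by simp
  qed
  show ?thesis using le unfolding eq by simp
qed

lemma kb_psd:
  fixes n :: nat
  assumes b_hol: "b holomorphic_on disk" and b_self: "\<forall>z\<in>disk. b z \<in> disk"
    and p: "\<forall>i<n. p i \<in> disk"
  shows "0 \<le> Re (\<Sum>i<n. \<Sum>j<n. v i * cnj (v j) * kb b (p i) (p j))"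
proof -
  define \<rho> where "\<rho> = Max (insert 0 ((\<lambda>i. norm (p i)) ` {..<n}))"
  have \<rho>1: "\<rho> < 1" unfolding \<rho>_def using p by (auto simp: dist_norm)
  have \<rho>0: "0 \<le> \<rho>" unfolding \<rho>_def by simp
  have p\<rho>: "norm (p i) \<le> \<rho>" if "i < n" for i unfolding \<rho>_def using that by (intro Max_ge) auto
  define F where "F r = (\<Sum>i<n. \<Sum>j<n. v i * cnj (v j) * ((1 - cnj (b (p i)) * b (p j)) * kr r (p i) (p j)))" for r
  have ev: "eventually (\<lambda>r. 0 \<le> Re (F r)) (at_left (1::real))"
  proof -
    have "eventually (\<lambda>r. \<rho> < r \<and> r < 1) (at_left (1::real))"
      using eventually_at_left_real[OF \<rho>1] by (rule eventually_mono) auto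
    then show ?thesis
    proof (rule eventually_mono)
      fix r assume r: "\<rho> < r \<and> r < 1"
      show "0 \<le> Re (F r)" unfolding F_def
        by (rule pos_r[OF b_hol b_self]) (use r \<rho>0 p\<rho> in force)+
    qed
  qed
  have den: "1 - cnj (p i) * p j \<noteq> 0" if "i < n" "j < n" for i j
  proof
    assume "1 - cnj (p i) * p j = 0"
    then have "norm (cnj (p i) * p j) = 1" by (metis eq_iff_diff_eq_0 norm_one)
    moreover have "norm (cnj (p i) * p j) < 1" using p that
      by (simp add: norm_mult dist_norm) (metis mult_le_one mult_strict_mono' norm_ge_zero mult_1_right less_le)
    ultimately show False by simp
  qed
  have lim: "((\<lambda>r. kr r (p i) (p j)) \<longlongrightarrow> 1 / (1 - cnj (p i) * p j)) (at_left 1)" if "i < n" "j < n" for i j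
  proof -
    have "((\<lambda>r. of_real (r^2) / (of_real (r^2) - cnj (p i) * p j)) \<longlongrightarrow> of_real (1^2) / (of_real (1^2) - cnj (p i) * p j)) (at_left (1::real))"
      using den[OF that] by (intro tendsto_intros) auto
    then show ?thesis unfolding kr_def by simp
  qed
  have "((\<lambda>r. Re (F r)) \<longlongrightarrow> Re (\<Sum>i<n. \<Sum>j<n. v i * cnj (v j) * ((1 - cnj (b (p i)) * b (p j)) * (1 / (1 - cnj (p i) * p j))))) (at_left 1)"
    unfolding F_def by (intro tendsto_intros lim) auto
  moreover have "(\<Sum>i<n. \<Sum>j<n. v i * cnj (v j) * ((1 - cnj (b (p i)) * b (p j)) * (1 / (1 - cnj (p i) * p j)))) = (\<Sum>i<n. \<Sum>j<n. v i * cnj (v j) * kb b (p i) (p j))"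
    unfolding kb_def by simp
  ultimately have lim2: "((\<lambda>r. Re (F r)) \<longlongrightarrow> Re (\<Sum>i<n. \<Sum>j<n. v i * cnj (v j) * kb b (p i) (p j))) (at_left 1)" by (simp only:)
  show ?thesis
    by (rule tendsto_lowerbound[OF lim2 ev]) simp
qed

lemma kb_herm: "kb b w z = cnj (kb b z w)"
  unfolding kb_def by (simp add: mult.commute)

lemma kb_diag: "z \<in> disk \<Longrightarrow> b z \<in> disk \<Longrightarrow> kb b z z = of_real ((1 - (norm (b z))^2) / (1 - (norm z)^2))"
proof -
  have 1: "cnj (b z) * b z = of_real ((norm (b z))^2)" using complex_norm_square[of "b z"] by (simp add: mult.commute)
  have 2: "cnj z * z = of_real ((norm z)^2)" using complex_norm_square[of z] by (simp add: mult.commute)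
  show ?thesis unfolding kb_def 1 2 by simp
qed

lemma kb_diag_pos: "z \<in> disk \<Longrightarrow> b z \<in> disk \<Longrightarrow> 0 < (1 - (norm (b z))^2) / (1 - (norm z)^2)"
  by (intro divide_pos_pos) (auto simp: power_less_one_iff abs_square_less_1)

lemma kb_diag_le: "z \<in> disk \<Longrightarrow> b z \<in> disk \<Longrightarrow> (1 - (norm (b z))^2) / (1 - (norm z)^2) \<le> 1 / (1 - (norm z)^2)"
  by (intro divide_right_mono) (auto simp: abs_square_less_1 less_imp_le)

lemma re_aux: "Re (Q + X + cnj X + t * cnj t * k) = Re Q + 2 * Re X + (norm t)^2 * Re k"
  by (simp add: cmod_power2 algebra_simps) (simp add: power2_eq_square algebra_simps)

lemma psd_ext:
  fixes n :: nat
  assumes b_hol: "b holomorphic_on disk" and b_self: "\<forall>z\<in>disk. b z \<in> disk"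
    and zs: "\<forall>i<n. zs i \<in> disk" and \<zeta>: "\<zeta> \<in> disk"
  shows "0 \<le> Re (\<Sum>i<n. \<Sum>j<n. c i * cnj (c j) * kb b (zs i) (zs j))
            + 2 * Re (cnj t * (\<Sum>i<n. c i * kb b (zs i) \<zeta>)) + (norm t)^2 * Re (kb b \<zeta> \<zeta>)"
proof -
  define p where "p i = (if i < n then zs i else \<zeta>)" for i
  define v where "v i = (if i < n then c i else t)" for i
  have "0 \<le> Re (\<Sum>i<Suc n. \<Sum>j<Suc n. v i * cnj (v j) * kb b (p i) (p j))"
    by (rule kb_psd[OF b_hol b_self]) (use zs \<zeta> in \<open>auto simp: p_def\<close>)
  also have "(\<Sum>i<Suc n. \<Sum>j<Suc n. v i * cnj (v j) * kb b (p i) (p j)) =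
     (\<Sum>i<n. \<Sum>j<n. v i * cnj (v j) * kb b (p i) (p j)) + (\<Sum>i<n. v i * cnj (v n) * kb b (p i) (p n))
     + (\<Sum>j<n. v n * cnj (v j) * kb b (p n) (p j)) + v n * cnj (v n) * kb b (p n) (p n)"
    by (simp add: sum.distrib)
  also have "(\<Sum>i<n. \<Sum>j<n. v i * cnj (v j) * kb b (p i) (p j)) = (\<Sum>i<n. \<Sum>j<n. c i * cnj (c j) * kb b (zs i) (zs j))"
    by (intro sum.cong refl) (simp add: v_def p_def)
  also have "(\<Sum>i<n. v i * cnj (v n) * kb b (p i) (p n)) = cnj t * (\<Sum>i<n. c i * kb b (zs i) \<zeta>)"
    by (simp add: sum_distrib_left v_def p_def mult_ac)
  also have "(\<Sum>j<n. v n * cnj (v j) * kb b (p n) (p j)) = cnj (cnj t * (\<Sum>i<n. c i * kb b (zs i) \<zeta>))"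
    by (simp add: sum_distrib_left v_def p_def mult_ac kb_herm[of b \<zeta>])
  also have "v n * cnj (v n) * kb b (p n) (p n) = t * cnj t * kb b \<zeta> \<zeta>" by (simp add: v_def p_def)
  finally show ?thesis unfolding re_aux .
qed

lemma eval_bound:
  fixes n :: nat
  assumes b_hol: "b holomorphic_on disk" and b_self: "\<forall>z\<in>disk. b z \<in> disk"
    and a: "adm b n c zs" and \<zeta>: "\<zeta> \<in> disk"
  shows "(norm (\<Sum>i<n. c i * kb b (zs i) \<zeta>))^2 \<le> (1 - (norm (b \<zeta>))^2) / (1 - (norm \<zeta>)^2)"
proof -
  define H where "H = (\<Sum>i<n. c i * kb b (zs i) \<zeta>)"
  define K where "K = (1 - (norm (b \<zeta>))^2) / (1 - (norm \<zeta>)^2)"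
  have bz: "b \<zeta> \<in> disk" using b_self \<zeta> by auto
  have K0: "0 < K" unfolding K_def by (rule kb_diag_pos[of \<zeta> b, OF \<zeta> bz])
  have ReK: "Re (kb b \<zeta> \<zeta>) = K" unfolding K_def using kb_diag[of \<zeta> b, OF \<zeta> bz] by simp
  have zs: "\<forall>i<n. zs i \<in> disk" and Q: "Re (\<Sum>i<n. \<Sum>j<n. c i * cnj (c j) * kb b (zs i) (zs j)) \<le> 1"
    using a unfolding adm_def by auto
  define t where "t = - H / of_real K"
  have "0 \<le> Re (\<Sum>i<n. \<Sum>j<n. c i * cnj (c j) * kb b (zs i) (zs j))
            + 2 * Re (cnj t * H) + (norm t)^2 * Re (kb b \<zeta> \<zeta>)"
    unfolding H_def by (rule psd_ext[OF b_hol b_self zs \<zeta>])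
  also have "2 * Re (cnj t * H) = - 2 * (norm H)^2 / K"
    unfolding t_def by (simp add: complex_mult_cnj cmod_power2 mult.commute[of "cnj H"] divide_simps)
  also have "(norm t)^2 * Re (kb b \<zeta> \<zeta>) = (norm H)^2 / K"
    unfolding t_def ReK using K0 by (simp add: norm_divide power2_eq_square)
  finally have "(norm H)^2 / K \<le> Re (\<Sum>i<n. \<Sum>j<n. c i * cnj (c j) * kb b (zs i) (zs j))" by simp
  with Q have "(norm H)^2 / K \<le> 1" by simp
  then show ?thesis using K0 unfolding H_def[symmetric] K_def[symmetric] by (simp add: divide_le_eq)
qed

lemma higher_deriv_sum:
  fixes f :: "'i \<Rightarrow> complex \<Rightarrow> complex"
  assumes "finite I" "\<And>i. i \<in> I \<Longrightarrow> f i holomorphic_on S" "open S" "z \<in> S"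
  shows "(deriv ^^ j) (\<lambda>w. \<Sum>i\<in>I. f i w) z = (\<Sum>i\<in>I. (deriv ^^ j) (f i) z)"
  using assms(1,2)
proof (induction I rule: finite_induct)
  case empty
  show ?case by (simp add: higher_deriv_const)
next
  case (insert a I)
  have ha: "f a holomorphic_on S" using insert by auto
  have hI: "(\<lambda>w. \<Sum>i\<in>I. f i w) holomorphic_on S" using insert by (intro holomorphic_on_sum) auto
  have "(deriv ^^ j) (\<lambda>w. \<Sum>i\<in>insert a I. f i w) z = (deriv ^^ j) (\<lambda>w. f a w + (\<Sum>i\<in>I. f i w)) z"
    using insert by simp
  also have "\<dots> = (deriv ^^ j) (f a) z + (deriv ^^ j) (\<lambda>w. \<Sum>i\<in>I. f i w) z"
    by (rule higher_deriv_add[OF ha hI assms(3,4)])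
  also have "\<dots> = (\<Sum>i\<in>insert a I. (deriv ^^ j) (f i) z)" using insert by simp
  finally show ?case .
qed

lemma kb_holo:
  assumes b_hol: "b holomorphic_on disk" and w: "w \<in> disk"
  shows "kb b w holomorphic_on disk"
proof -
  have nz: "1 - cnj w * \<zeta> \<noteq> 0" if "\<zeta> \<in> disk" for \<zeta>
  proof
    assume "1 - cnj w * \<zeta> = 0"
    then have "norm (cnj w * \<zeta>) = 1" by (metis eq_iff_diff_eq_0 norm_one)
    moreover have "norm (cnj w * \<zeta>) < 1" using w that
      by (simp add: norm_mult dist_norm) (metis mult_le_one mult_strict_mono' norm_ge_zero mult_1_right less_le)
    ultimately show False by simp
  qed
  have "(\<lambda>\<zeta>. (1 - cnj (b w) * b \<zeta>) / (1 - cnj w * \<zeta>)) holomorphic_on disk"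
    using nz b_hol by (intro holomorphic_intros) auto
  then show ?thesis unfolding kb_def[abs_def] by simp
qed

lemma dk_eq: "dk b j z w = cnj ((deriv ^^ j) (kb b w) z)"
proof -
  have "(\<lambda>\<zeta>. (1 - b \<zeta> * cnj (b w)) / (1 - \<zeta> * cnj w)) = kb b w"
    unfolding kb_def by (simp add: fun_eq_iff mult.commute)
  then show ?thesis unfolding dk_def by simp
qed

lemma pairing_dk:
  fixes n :: nat
  assumes b_hol: "b holomorphic_on disk" and zs: "\<forall>i<n. zs i \<in> disk" and z: "z \<in> disk"
  shows "pairing n c zs (dk b j z) = cnj ((deriv ^^ j) (\<lambda>\<zeta>. \<Sum>i<n. c i * kb b (zs i) \<zeta>) z)"
proof -
  have "(deriv ^^ j) (\<lambda>\<zeta>. \<Sum>i<n. c i * kb b (zs i) \<zeta>) z = (\<Sum>i<n. (deriv ^^ j) (\<lambda>\<zeta>. c i * kb b (zs i) \<zeta>) z)"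
    by (rule higher_deriv_sum[where S=disk]) (use zs kb_holo[OF b_hol] z in \<open>auto intro!: holomorphic_intros\<close>)
  also have "\<dots> = (\<Sum>i<n. c i * (deriv ^^ j) (kb b (zs i)) z)"
    using zs kb_holo[OF b_hol] z by (intro sum.cong refl higher_deriv_cmult[where A=disk]) auto
  finally show ?thesis unfolding pairing_def dk_eq by simp
qed

lemma Hsum_holo:
  fixes n :: nat
  assumes b_hol: "b holomorphic_on disk" and zs: "\<forall>i<n. zs i \<in> disk"
  shows "(\<lambda>\<zeta>. \<Sum>i<n. c i * kb b (zs i) \<zeta>) holomorphic_on disk"
  using zs kb_holo[OF b_hol] by (intro holomorphic_intros) auto

lemma norm_H_bound:
  fixes n :: nat
  assumes b_hol: "b holomorphic_on disk" and b_self: "\<forall>z\<in>disk. b z \<in> disk"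
    and a: "adm b n c zs" and \<zeta>: "\<zeta> \<in> disk"
  shows "norm (\<Sum>i<n. c i * kb b (zs i) \<zeta>) \<le> sqrt (1 / (1 - (norm \<zeta>)^2))"
proof -
  have bz: "b \<zeta> \<in> disk" using b_self \<zeta> by auto
  have "(norm (\<Sum>i<n. c i * kb b (zs i) \<zeta>))^2 \<le> 1 / (1 - (norm \<zeta>)^2)"
    using eval_bound[OF b_hol b_self a \<zeta>] kb_diag_le[of \<zeta> b, OF \<zeta> bz] by linarith
  then show ?thesis by (simp add: real_le_rsqrt)
qed

lemma lemmaA:
  assumes b_hol: "b holomorphic_on disk" and b_self: "\<forall>z\<in>disk. b z \<in> disk" and z0: "z0 \<in> disk"
  shows "\<exists>C\<ge>0. hb_norm b (dk b j z0) \<le> ennreal C"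
proof -
  define \<rho> where "\<rho> = (1 - norm z0) / 2"
  define s where "s = (1 + norm z0) / 2"
  have n0: "norm z0 < 1" using z0 by (simp add: dist_norm)
  have \<rho>0: "0 < \<rho>" unfolding \<rho>_def using n0 by simp
  have s1: "s < 1" "0 \<le> s" unfolding s_def using n0 by auto
  define M where "M = sqrt (1 / (1 - s^2))"
  have M0: "0 \<le> M" unfolding M_def using s1 power_le_one[of s 2] by simp
  have cb: "cball z0 \<rho> \<subseteq> disk"
  proof
    fix u assume "u \<in> cball z0 \<rho>"
    then have "norm u \<le> norm z0 + \<rho>" using norm_triangle_sub[of u z0] by (simp add: dist_norm norm_minus_commute)
    also have "\<dots> = s" unfolding s_def \<rho>_def by (simp add: field_simps)
    finally show "u \<in> disk" using s1 by (simp add: dist_norm)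
  qed
  have Hbd: "norm (\<Sum>i<n. c i * kb b (zs i) u) \<le> M" if a: "adm b n c zs" and u: "u \<in> cball z0 \<rho>" for n c zs u
  proof -
    have ud: "u \<in> disk" using cb u by auto
    have nu: "norm u \<le> s"
    proof -
      have "norm u \<le> norm z0 + \<rho>" using norm_triangle_sub[of u z0] u by (simp add: dist_norm norm_minus_commute)
      also have "\<dots> = s" unfolding s_def \<rho>_def by (simp add: field_simps)
      finally show ?thesis .
    qed
    have "norm (\<Sum>i<n. c i * kb b (zs i) u) \<le> sqrt (1 / (1 - (norm u)^2))"
      by (rule norm_H_bound[OF b_hol b_self a ud])
    also have "\<dots> \<le> M" unfolding M_def
    proof (intro real_sqrt_le_mono)
      have le: "1 - s^2 \<le> 1 - (norm u)^2" using nu by (simp add: power_mono)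
      have p1: "0 < 1 - s^2" using s1 by (simp add: power_less_one_iff abs_square_less_1)
      have p2: "0 < 1 - (norm u)^2" using ud by (simp add: abs_square_less_1 dist_norm)
      show "1 / (1 - (norm u)^2) \<le> 1 / (1 - s^2)"
        by (rule divide_left_mono[OF le]) (use p1 p2 in auto)
    qed
    finally show ?thesis .
  qed
  define C where "C = fact j * (M + 1) / \<rho>^j + M"
  have C0: "0 \<le> C" unfolding C_def using M0 \<rho>0 by auto
  have "hb_norm b (dk b j z0) \<le> ennreal C"
  proof (rule hb_norm_le)
    fix n c zs assume a: "adm b n c zs"
    have zs: "\<forall>i<n. zs i \<in> disk" using a unfolding adm_def by auto
    define H where "H = (\<lambda>\<zeta>. \<Sum>i<n. c i * kb b (zs i) \<zeta>)"
    have hol: "H holomorphic_on disk" unfolding H_def by (rule Hsum_holo[OF b_hol zs])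
    have "norm (pairing n c zs (dk b j z0)) = norm ((deriv ^^ j) H z0)"
      unfolding pairing_dk[OF b_hol zs z0] H_def by simp
    also have "\<dots> \<le> C"
    proof (cases "j = 0")
      case True
      then show ?thesis using Hbd[OF a, of z0] \<rho>0 M0 unfolding C_def H_def by simp
    next
      case False
      have "norm ((deriv ^^ j) H z0) \<le> fact j * (M + 1) / \<rho>^j"
      proof (rule Cauchy_higher_deriv_bound[where y=0])
        show "H holomorphic_on ball z0 \<rho>" using hol cb by (meson ball_subset_cball holomorphic_on_subset subset_trans)
        show "continuous_on (cball z0 \<rho>) H" using holomorphic_on_imp_continuous_on[OF hol] cb by (rule continuous_on_subset)
        show "H w \<in> ball 0 (M + 1)" if "w \<in> ball z0 \<rho>" for w
          using Hbd[OF a, of w] that unfolding H_def by (simp add: dist_norm)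
      qed (use \<rho>0 False in auto)
      then show ?thesis unfolding C_def using M0 by simp
    qed
    finally show "norm (pairing n c zs (dk b j z0)) \<le> C" .
  qed
  then show ?thesis using C0 by blast
qed

lemma den_nz: assumes "w \<in> disk" "\<zeta> \<in> disk" shows "1 - cnj w * \<zeta> \<noteq> 0"
proof
  assume "1 - cnj w * \<zeta> = 0"
  then have "norm (cnj w * \<zeta>) = 1" by (metis eq_iff_diff_eq_0 norm_one)
  moreover have "norm (cnj w * \<zeta>) < 1" using assms
    by (simp add: norm_mult dist_norm) (metis mult_le_one mult_strict_mono' norm_ge_zero mult_1_right less_le)
  ultimately show False by simp
qed

definition Ef :: "complex \<Rightarrow> nat \<Rightarrow> complex \<Rightarrow> complex" where
  "Ef x r z = fact r * x ^ r / (1 - x * z) ^ Suc r"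

lemma Ef_aux:
  fixes d x F :: complex
  assumes "d \<noteq> 0"
  shows "(0 * d ^ Suc r - F * x ^ r * ((1 + of_nat r) * (- x * d ^ r))) / (d ^ Suc r * d ^ Suc r)
     = F * (1 + of_nat r) * x ^ Suc r / d ^ Suc (Suc r)"
  using assms by (simp add: field_simps power_Suc)

lemma Ef_deriv:
  assumes "1 - x * z \<noteq> 0"
  shows "(Ef x r has_field_derivative Ef x (Suc r) z) (at z)"
proof -
  have d1: "((\<lambda>z. 1 - x * z) has_field_derivative - x) (at z)" by (auto intro!: derivative_eq_intros)
  have d2: "((\<lambda>z. (1 - x * z) ^ Suc r) has_field_derivative (1 + of_nat r) * (- x * (1 - x * z) ^ r)) (at z)"
    by (rule DERIV_power_Suc[OF d1])
  have "((\<lambda>z. fact r * x ^ r / (1 - x * z) ^ Suc r) has_field_derivative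
     (0 * (1 - x * z) ^ Suc r - fact r * x ^ r * ((1 + of_nat r) * (- x * (1 - x * z) ^ r))) / ((1 - x * z) ^ Suc r * (1 - x * z) ^ Suc r)) (at z)"
    by (rule DERIV_divide[OF DERIV_const d2]) (use assms in simp)
  moreover have "(0 * (1 - x * z) ^ Suc r - fact r * x ^ r * ((1 + of_nat r) * (- x * (1 - x * z) ^ r))) / ((1 - x * z) ^ Suc r * (1 - x * z) ^ Suc r)
      = Ef x (Suc r) z"
    unfolding Ef_def by (subst Ef_aux[where d="1 - x*z" and F="fact r" and x=x and r=r]) (use assms in \<open>simp_all add: fact_Suc algebra_simps\<close>)
  ultimately show ?thesis unfolding Ef_def[abs_def] by simp
qed

lemma e_deriv:
  assumes w: "w \<in> disk"
  shows "z \<in> disk \<Longrightarrow> (deriv ^^ r) (\<lambda>\<zeta>. 1 / (1 - cnj w * \<zeta>)) z = Ef (cnj w) r z"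
proof (induction r arbitrary: z)
  case 0
  then show ?case by (simp add: Ef_def)
next
  case (Suc r)
  have "(deriv ^^ Suc r) (\<lambda>\<zeta>. 1 / (1 - cnj w * \<zeta>)) z = deriv ((deriv ^^ r) (\<lambda>\<zeta>. 1 / (1 - cnj w * \<zeta>))) z"
    by simp
  also have "\<dots> = deriv (Ef (cnj w) r) z"
  proof (rule deriv_cong_ev)
    have "eventually (\<lambda>u. u \<in> disk) (nhds z)" using Suc.prems by (intro eventually_nhds_in_open) auto
    then show "eventually (\<lambda>u. (deriv ^^ r) (\<lambda>\<zeta>. 1 / (1 - cnj w * \<zeta>)) u = Ef (cnj w) r u) (nhds z)"
      by (rule eventually_mono) (rule Suc.IH)
  qed simp
  also have "\<dots> = Ef (cnj w) (Suc r) z"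
    by (rule DERIV_imp_deriv[OF Ef_deriv]) (rule den_nz[OF w Suc.prems])
  finally show ?case .
qed

lemma kb_hd:
  assumes b_hol: "b holomorphic_on disk" and w: "w \<in> disk" and z: "z \<in> disk"
  shows "(deriv ^^ j) (kb b w) z = Ef (cnj w) j z - cnj (b w) *
           (\<Sum>i = 0..j. of_nat (j choose i) * (deriv ^^ i) b z * Ef (cnj w) (j - i) z)"
proof -
  define e where "e = (\<lambda>\<zeta>. 1 / (1 - cnj w * \<zeta>))"
  have eh: "e holomorphic_on disk" unfolding e_def using den_nz[OF w] by (intro holomorphic_intros) auto
  have kbe: "kb b w = (\<lambda>\<zeta>. e \<zeta> - cnj (b w) * (b \<zeta> * e \<zeta>))"
    unfolding kb_def e_def by (simp add: fun_eq_iff diff_divide_distrib)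
  have "(deriv ^^ j) (kb b w) z = (deriv ^^ j) e z - (deriv ^^ j) (\<lambda>\<zeta>. cnj (b w) * (b \<zeta> * e \<zeta>)) z"
    unfolding kbe by (rule higher_deriv_diff[OF eh _ _ z]) (use eh b_hol in \<open>auto intro!: holomorphic_intros\<close>)
  also have "(deriv ^^ j) (\<lambda>\<zeta>. cnj (b w) * (b \<zeta> * e \<zeta>)) z = cnj (b w) * (deriv ^^ j) (\<lambda>\<zeta>. b \<zeta> * e \<zeta>) z"
    by (rule higher_deriv_cmult[where A=disk]) (use eh b_hol z in \<open>auto intro!: holomorphic_intros\<close>)
  also have "(deriv ^^ j) (\<lambda>\<zeta>. b \<zeta> * e \<zeta>) z = (\<Sum>i = 0..j. of_nat (j choose i) * (deriv ^^ i) b z * (deriv ^^ (j - i)) e z)"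
    by (rule higher_deriv_mult[OF b_hol eh _ z]) auto
  also have "\<dots> = (\<Sum>i = 0..j. of_nat (j choose i) * (deriv ^^ i) b z * Ef (cnj w) (j - i) z)"
    unfolding e_def using e_deriv[OF w z] by simp
  finally show ?thesis unfolding e_def using e_deriv[OF w z] by simp
qed

lemma lagrange_coeff_conv:
  fixes P :: "'a \<Rightarrow> complex poly" and x :: "nat \<Rightarrow> complex" and n :: nat
  assumes inj: "inj_on x {..n}" and deg: "\<forall>z. degree (P z) \<le> n"
    and conv: "\<forall>k\<le>n. ((\<lambda>z. poly (P z) (x k)) \<longlongrightarrow> V k) F"
  shows "\<exists>L. ((\<lambda>z. coeff (P z) l) \<longlongrightarrow> L) F"
proof -
  define Lb where "Lb k = smult (1 / (\<Prod>l\<in>{..n}-{k}. (x k - x l))) (\<Prod>l\<in>{..n}-{k}. [:-x l, 1:])" for k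
  have Lb_eval: "poly (Lb k) (x j) = (if j = k then 1 else 0)" if "k \<le> n" "j \<le> n" for k j
  proof (cases "j = k")
    case True
    have "(\<Prod>l\<in>{..n}-{k}. (x k - x l)) \<noteq> 0"
      using inj that by (auto simp: inj_on_def)
    then show ?thesis unfolding Lb_def using True by (simp add: poly_prod)
  next
    case False
    have "(\<Prod>l\<in>{..n}-{k}. (x j - x l)) = 0"
      using False that by (intro prod_zero) auto
    then show ?thesis unfolding Lb_def using False by (simp add: poly_prod)
  qed
  have Lb_deg: "degree (Lb k) \<le> n" if "k \<le> n" for k
  proof -
    have "degree (Lb k) \<le> degree (\<Prod>l\<in>{..n}-{k}. [:-x l, 1:])" unfolding Lb_def by (rule degree_smult_le)
    also have "\<dots> \<le> (\<Sum>l\<in>{..n}-{k}. degree [:-x l, 1:])" using degree_prod_sum_le[of "{..n}-{k}" "\<lambda>l. [:-x l, 1:]"] by (simp add: o_def)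
    also have "\<dots> = card ({..n}-{k})" by simp
    also have "\<dots> = n" using that by simp
    finally show ?thesis .
  qed
  have interp: "p = (\<Sum>k\<le>n. smult (poly p (x k)) (Lb k))" if dp: "degree p \<le> n" for p
  proof (rule ccontr)
    define q where "q = p - (\<Sum>k\<le>n. smult (poly p (x k)) (Lb k))"
    assume "p \<noteq> (\<Sum>k\<le>n. smult (poly p (x k)) (Lb k))"
    then have q0: "q \<noteq> 0" unfolding q_def by simp
    have dq: "degree q \<le> n" unfolding q_def
      by (intro degree_diff_le dp degree_sum_le) (auto intro: order.trans[OF degree_smult_le] Lb_deg)
    have rq: "poly q (x j) = 0" if "j \<le> n" for j
    proof -
      have "(\<Sum>k\<le>n. poly p (x k) * poly (Lb k) (x j)) = (\<Sum>k\<le>n. if k = j then poly p (x j) else 0)"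
        using that by (intro sum.cong refl) (auto simp: Lb_eval)
      also have "\<dots> = poly p (x j)" using that by simp
      finally show ?thesis unfolding q_def by (simp add: poly_sum)
    qed
    have "x ` {..n} \<subseteq> {y. poly q y = 0}" using rq by auto
    then have "card (x ` {..n}) \<le> card {y. poly q y = 0}"
      by (intro card_mono poly_roots_finite q0)
    also have "\<dots> \<le> degree q" by (rule card_poly_roots_bound[OF q0])
    also have "\<dots> \<le> n" by (rule dq)
    finally have "Suc n \<le> n" using card_image[OF inj] by simp
    then show False by simp
  qed
  have "coeff (P z) l = (\<Sum>k\<le>n. poly (P z) (x k) * coeff (Lb k) l)" for z
    using interp[OF deg[rule_format, of z]] by (metis (no_types, lifting) coeff_smult coeff_sum sum.cong)
  moreover have "((\<lambda>z. \<Sum>k\<le>n. poly (P z) (x k) * coeff (Lb k) l) \<longlongrightarrow> (\<Sum>k\<le>n. V k * coeff (Lb k) l)) F"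
    using conv by (intro tendsto_sum tendsto_mult_right) auto
  ultimately show ?thesis by auto
qed

lemma coeff_lin_pow_conv:
  assumes lim: "((\<lambda>z. z) \<longlongrightarrow> (1::complex)) F"
  shows "((\<lambda>z. coeff ([:1, -z:] ^ i) s) \<longlongrightarrow> coeff ([:1, -1:] ^ i) s) F"
proof (induction i arbitrary: s)
  case 0
  then show ?case by simp
next
  case (Suc i)
  have eq: "coeff ([:1, -z:] ^ Suc i) s = coeff ([:1, -z:] ^ i) s + (if s = 0 then 0 else - z * coeff ([:1, -z:] ^ i) (s - 1))" for z :: complex
  proof -
    have "[:1, -z:] ^ Suc i = [:1, -z:] * [:1, -z:] ^ i" by simp
    also have "\<dots> = [:1, -z:] ^ i + pCons 0 (smult (-z) ([:1, -z:] ^ i))"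
      by (simp add: mult_pCons_left)
    finally show ?thesis by (cases s) auto
  qed
  have t: "((\<lambda>z. z * coeff ([:1, -z:] ^ i) (s - 1)) \<longlongrightarrow> coeff ([:1, -1:] ^ i) (s - 1)) F"
    using tendsto_mult[OF lim Suc.IH[of "s - 1"]] by simp
  show ?case
  proof (cases "s = 0")
    case True
    then show ?thesis unfolding eq using Suc.IH[of s] by simp
  next
    case False
    have "((\<lambda>z. coeff ([:1, -z:] ^ i) s - z * coeff ([:1, -z:] ^ i) (s - 1)) \<longlongrightarrow>
       coeff ([:1, -1:] ^ i) s - coeff ([:1, -1:] ^ i) (s - 1)) F"
      by (rule tendsto_diff[OF Suc.IH t])
    then show ?thesis unfolding eq using False by simp
  qed
qed

lemma deriv_b_conv:
  fixes F :: "complex filter" and m :: nat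
  assumes b_hol: "b holomorphic_on disk"
    and b_nz: "\<exists>z\<in>disk. b z \<noteq> 0"
    and ev: "eventually (\<lambda>z. z \<in> disk) F"
    and lim1: "((\<lambda>z. z) \<longlongrightarrow> 1) F"
    and hyp: "\<forall>w\<in>disk. \<exists>L. ((\<lambda>z. (deriv ^^ m) (kb b w) z) \<longlongrightarrow> L) F"
  shows "\<forall>i\<le>m. \<exists>L. ((\<lambda>z. (deriv ^^ i) b z) \<longlongrightarrow> L) F"
proof -
  obtain z0 where z0: "z0 \<in> disk" "b z0 \<noteq> 0" using b_nz by auto
  have "continuous (at z0) b"
    using holomorphic_on_imp_continuous_on[OF b_hol] z0 by (simp add: continuous_on_eq_continuous_at)
  then have "eventually (\<lambda>u. b u \<noteq> 0) (at z0)" using z0 by (simp add: continuous_at tendsto_imp_eventually_ne)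
  moreover have "eventually (\<lambda>u. u \<in> disk) (at z0)" using z0 by (intro eventually_at_in_open') auto
  ultimately have "eventually (\<lambda>u. b u \<noteq> 0 \<and> u \<in> disk) (at z0)" by eventually_elim auto
  then obtain \<epsilon> where \<epsilon>: "\<epsilon> > 0" "\<And>u. u \<noteq> z0 \<Longrightarrow> dist u z0 < \<epsilon> \<Longrightarrow> b u \<noteq> 0 \<and> u \<in> disk"
    unfolding eventually_at by auto
  define w where "w k = z0 + of_real (\<epsilon> / 2 * (Suc k) / (Suc m + 1))" for k
  have wprop: "b (w k) \<noteq> 0 \<and> w k \<in> disk" if "k \<le> m" for k
  proof (rule \<epsilon>(2))
    define h where "h = \<epsilon> / 2 * (Suc k) / (Suc m + 1)"
    have wk: "w k = z0 + of_real h" unfolding w_def h_def ..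
    have pos: "0 < h" unfolding h_def using \<epsilon> by simp
    have km: "\<epsilon> * real k \<le> \<epsilon> * real m" by (intro mult_left_mono) (use that \<epsilon> in auto)
    have "0 \<le> \<epsilon> * real m" using \<epsilon> by simp
    then have km2: "\<epsilon> * real k < \<epsilon> * 3 + \<epsilon> * (real m * 2)" using km \<epsilon> by linarith
    have hl: "h < \<epsilon>" unfolding h_def using \<epsilon> km2 by (simp add: field_simps)
    have "complex_of_real h \<noteq> 0" using pos by (metis of_real_eq_0_iff less_irrefl)
    then show "w k \<noteq> z0" unfolding wk by (metis add_cancel_right_right)
    have "dist (w k) z0 = norm (complex_of_real h)" unfolding wk dist_norm by (simp only: add_diff_cancel_left')
    also have "\<dots> = h" using pos by (metis norm_of_real abs_of_pos)
    finally show "dist (w k) z0 < \<epsilon>" using hl by simp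
  qed
  define x where "x k = cnj (w k)" for k
  have injx: "inj_on x {..m}"
  proof (rule inj_onI)
    fix k l assume "k \<in> {..m}" "l \<in> {..m}" "x k = x l"
    then have "of_real (\<epsilon> / 2 * (Suc k) / (Suc m + 1)) = (of_real (\<epsilon> / 2 * (Suc l) / (Suc m + 1)) :: complex)"
      unfolding x_def w_def by simp
    then have "\<epsilon> / 2 * (Suc k) / (Suc m + 1) = \<epsilon> / 2 * (Suc l) / (Suc m + 1)" by (simp only: of_real_eq_iff)
    then show "k = l" using \<epsilon> by (simp add: field_simps)
  qed
  define d where "d i z = of_nat (m choose i) * fact (m - i) * (deriv ^^ i) b z" for i z
  define P where "P z = (\<Sum>i\<le>m. smult (d i z) (monom 1 (m - i) * [:1, -z:] ^ i))" for z
  have polyP: "poly (P z) y = (\<Sum>i\<le>m. d i z * (y ^ (m - i) * (1 - z * y) ^ i))" for z y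
    unfolding P_def by (simp add: poly_sum poly_monom algebra_simps)
  have degP: "\<forall>z. degree (P z) \<le> m"
  proof
    fix z
    show "degree (P z) \<le> m" unfolding P_def
    proof (intro degree_sum_le)
      fix i assume i: "i \<in> {..m}"
      have "degree (smult (d i z) (monom 1 (m - i) * [:1, -z:] ^ i)) \<le> degree (monom (1::complex) (m - i) * [:1, -z:] ^ i)"
        by (rule degree_smult_le)
      also have "\<dots> \<le> degree (monom (1::complex) (m - i)) + degree ([:1, -z:] ^ i)" by (rule degree_mult_le)
      also have "\<dots> \<le> (m - i) + degree ([:1, -z:]) * i" by (intro add_mono degree_monom_le degree_power_le)
      also have "\<dots> \<le> m" using i by (simp add: degree_pCons_eq_if)
      finally show "degree (smult (d i z) (monom 1 (m - i) * [:1, -z:] ^ i)) \<le> m" .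
    qed simp
  qed
  have convP: "\<forall>k\<le>m. \<exists>V. ((\<lambda>z. poly (P z) (x k)) \<longlongrightarrow> V) F"
  proof (intro allI impI)
    fix k assume k: "k \<le> m"
    have wk: "w k \<in> disk" "b (w k) \<noteq> 0" using wprop[OF k] by auto
    obtain L where L: "((\<lambda>z. (deriv ^^ m) (kb b (w k)) z) \<longlongrightarrow> L) F" using hyp wk by blast
    have x1: "1 - x k * 1 \<noteq> 0"
    proof -
      have "norm (x k) < 1" using wk unfolding x_def by (simp add: dist_norm)
      then show ?thesis by auto
    qed
    have lim: "((\<lambda>z. (Ef (x k) m z - (deriv ^^ m) (kb b (w k)) z) / cnj (b (w k)) * (1 - x k * z) ^ Suc m)
       \<longlongrightarrow> (Ef (x k) m 1 - L) / cnj (b (w k)) * (1 - x k * 1) ^ Suc m) F"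
      unfolding Ef_def using L lim1 x1 wk by (intro tendsto_intros) auto
    have "eventually (\<lambda>z. (Ef (x k) m z - (deriv ^^ m) (kb b (w k)) z) / cnj (b (w k)) * (1 - x k * z) ^ Suc m
        = poly (P z) (x k)) F"
      using ev
    proof (rule eventually_mono)
      fix z assume z: "z \<in> disk"
      have nz: "1 - x k * z \<noteq> 0" unfolding x_def by (rule den_nz[OF wk(1) z])
      have "(Ef (x k) m z - (deriv ^^ m) (kb b (w k)) z) / cnj (b (w k)) =
         (\<Sum>i = 0..m. of_nat (m choose i) * (deriv ^^ i) b z * Ef (x k) (m - i) z)"
        unfolding kb_hd[OF b_hol wk(1) z] x_def using wk by simp
      then have "(Ef (x k) m z - (deriv ^^ m) (kb b (w k)) z) / cnj (b (w k)) * (1 - x k * z) ^ Suc m =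
         (\<Sum>i\<le>m. of_nat (m choose i) * (deriv ^^ i) b z * Ef (x k) (m - i) z * (1 - x k * z) ^ Suc m)"
        unfolding atLeast0AtMost by (simp only: sum_distrib_right)
      also have "\<dots> = (\<Sum>i\<le>m. d i z * (x k ^ (m - i) * (1 - z * x k) ^ i))"
      proof (intro sum.cong refl)
        fix i assume i: "i \<in> {..m}"
        have "(1 - x k * z) ^ Suc m = (1 - x k * z) ^ Suc (m - i) * (1 - x k * z) ^ i"
          using i by (simp add: power_add[symmetric])
        then have "Ef (x k) (m - i) z * (1 - x k * z) ^ Suc m = fact (m - i) * x k ^ (m - i) * (1 - x k * z) ^ i"
          unfolding Ef_def using nz by simp
        then show "of_nat (m choose i) * (deriv ^^ i) b z * Ef (x k) (m - i) z * (1 - x k * z) ^ Suc m =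
          d i z * (x k ^ (m - i) * (1 - z * x k) ^ i)"
          unfolding d_def by (simp add: mult_ac)
      qed
      finally show "(Ef (x k) m z - (deriv ^^ m) (kb b (w k)) z) / cnj (b (w k)) * (1 - x k * z) ^ Suc m
        = poly (P z) (x k)" unfolding polyP .
    qed
    with lim have "((\<lambda>z. poly (P z) (x k)) \<longlongrightarrow> (Ef (x k) m 1 - L) / cnj (b (w k)) * (1 - x k * 1) ^ Suc m) F"
      by (rule Lim_transform_eventually)
    then show "\<exists>V. ((\<lambda>z. poly (P z) (x k)) \<longlongrightarrow> V) F" by blast
  qed
  then obtain V where V: "\<forall>k\<le>m. ((\<lambda>z. poly (P z) (x k)) \<longlongrightarrow> V k) F"
    by metis
  have coeffconv: "\<exists>L. ((\<lambda>z. coeff (P z) l) \<longlongrightarrow> L) F" for l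
    by (rule lagrange_coeff_conv[OF injx degP V])
  define \<omega> where "\<omega> i l (z::complex) = (if l < m - i then 0 else coeff ([:1, -z:] ^ i) (l - (m - i)))" for i l z
  have coeffP: "coeff (P z) l = (\<Sum>i\<le>m. d i z * \<omega> i l z)" for z l
    unfolding P_def \<omega>_def by (simp add: coeff_sum coeff_monom_mult) (intro sum.cong refl, simp)
  have \<omega>conv: "\<exists>L. ((\<lambda>z. \<omega> i l z) \<longlongrightarrow> L) F" for i l
  proof (cases "l < m - i")
    case True
    then show ?thesis unfolding \<omega>_def by auto
  next
    case False
    then show ?thesis unfolding \<omega>_def using coeff_lin_pow_conv[OF lim1, of i "l - (m - i)"] by auto
  qed
  have dconv: "\<forall>l. l \<le> m \<longrightarrow> (\<exists>L. ((\<lambda>z. d (m - l) z) \<longlongrightarrow> L) F)"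
  proof (intro allI)
    fix l show "l \<le> m \<longrightarrow> (\<exists>L. ((\<lambda>z. d (m - l) z) \<longlongrightarrow> L) F)"
    proof (induction l rule: less_induct)
      case (less l)
      show ?case
      proof
        assume lm: "l \<le> m"
        have split: "coeff (P z) l = d (m - l) z + (\<Sum>i\<in>{Suc (m - l)..m}. d i z * \<omega> i l z)" for z
        proof -
          have "coeff (P z) l = (\<Sum>i\<in>{m - l..m}. d i z * \<omega> i l z)"
            unfolding coeffP by (rule sum.mono_neutral_right) (auto simp: \<omega>_def)
          also have "\<dots> = d (m - l) z * \<omega> (m - l) l z + (\<Sum>i\<in>{Suc (m - l)..m}. d i z * \<omega> i l z)"
            by (rule sum.atLeast_Suc_atMost) simp
          also have "\<omega> (m - l) l z = 1" unfolding \<omega>_def using lm by (simp add: coeff_0_power)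
          finally show ?thesis by simp
        qed
        have restconv: "\<exists>L. ((\<lambda>z. \<Sum>i\<in>{Suc (m - l)..m}. d i z * \<omega> i l z) \<longlongrightarrow> L) F"
        proof -
          have "\<forall>i\<in>{Suc (m - l)..m}. \<exists>L. ((\<lambda>z. d i z * \<omega> i l z) \<longlongrightarrow> L) F"
          proof
            fix i assume i: "i \<in> {Suc (m - l)..m}"
            then have "m - i < l" "m - i \<le> m" and mi: "m - (m - i) = i" using lm by auto
            then obtain L1 where "((\<lambda>z. d i z) \<longlongrightarrow> L1) F" using less.IH[of "m - i"] mi by auto
            moreover obtain L2 where "((\<lambda>z. \<omega> i l z) \<longlongrightarrow> L2) F" using \<omega>conv by blast
            ultimately show "\<exists>L. ((\<lambda>z. d i z * \<omega> i l z) \<longlongrightarrow> L) F" by (blast intro: tendsto_mult)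
          qed
          then obtain LL where "\<forall>i\<in>{Suc (m - l)..m}. ((\<lambda>z. d i z * \<omega> i l z) \<longlongrightarrow> LL i) F" by metis
          then have "((\<lambda>z. \<Sum>i\<in>{Suc (m - l)..m}. d i z * \<omega> i l z) \<longlongrightarrow> (\<Sum>i\<in>{Suc (m - l)..m}. LL i)) F"
            by (intro tendsto_sum) auto
          then show ?thesis by blast
        qed
        obtain L1 where L1: "((\<lambda>z. coeff (P z) l) \<longlongrightarrow> L1) F" using coeffconv by blast
        obtain L2 where L2: "((\<lambda>z. \<Sum>i\<in>{Suc (m - l)..m}. d i z * \<omega> i l z) \<longlongrightarrow> L2) F" using restconv by blast
        have "((\<lambda>z. coeff (P z) l - (\<Sum>i\<in>{Suc (m - l)..m}. d i z * \<omega> i l z)) \<longlongrightarrow> L1 - L2) F"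
          by (intro tendsto_diff L1 L2)
        then show "\<exists>L. ((\<lambda>z. d (m - l) z) \<longlongrightarrow> L) F" unfolding split by auto
      qed
    qed
  qed
  show ?thesis
  proof (intro allI impI)
    fix i assume i: "i \<le> m"
    then obtain L where L: "((\<lambda>z. d i z) \<longlongrightarrow> L) F" using dconv[rule_format, of "m - i"] by auto
    have c0: "(of_nat (m choose i) * fact (m - i) :: complex) \<noteq> 0" using i by simp
    have "((\<lambda>z. d i z / (of_nat (m choose i) * fact (m - i))) \<longlongrightarrow> L / (of_nat (m choose i) * fact (m - i))) F"
      by (intro tendsto_intros L c0)
    moreover have "d i z / (of_nat (m choose i) * fact (m - i)) = (deriv ^^ i) b z" for z
      unfolding d_def using c0 by simp
    ultimately show "\<exists>L. ((\<lambda>z. (deriv ^^ i) b z) \<longlongrightarrow> L) F" by auto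
  qed
qed

lemma hb_norm_sym: "hb_norm b (\<lambda>w. f w - g w) = hb_norm b (\<lambda>w. g w - f w)"
  unfolding hb_norm_alt pairing_diff by (simp add: norm_minus_commute)

lemma hb_norm_tri1: "hb_norm b f \<le> hb_norm b (\<lambda>w. f w - g w) + hb_norm b g"
  using hb_norm_triangle[of b f "\<lambda>w. 0" g] by simp

lemma conv_to_bound:
  fixes D :: "complex \<Rightarrow> complex \<Rightarrow> complex"
  assumes \<Omega>d: "\<Omega> \<subseteq> disk" and lp: "1 islimpt \<Omega>"
    and conv: "((\<lambda>z. hb_norm b (\<lambda>w. D z w - D1 w)) \<longlongrightarrow> 0) (at 1 within \<Omega>)"
    and fin: "\<forall>\<zeta>\<in>disk. \<exists>C\<ge>0. hb_norm b (D \<zeta>) \<le> ennreal C"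
  shows "\<exists>\<delta>>0. \<exists>B\<ge>0. \<forall>\<zeta>\<in>\<Omega>. norm (\<zeta> - 1) < \<delta> \<longrightarrow> hb_norm b (D \<zeta>) \<le> ennreal B"
proof -
  have "eventually (\<lambda>z. hb_norm b (\<lambda>w. D z w - D1 w) < 1) (at 1 within \<Omega>)"
    using order_tendstoD(2)[OF conv, of 1] by simp
  then obtain d where d: "d > 0" "\<And>x. x \<in> \<Omega> \<Longrightarrow> x \<noteq> 1 \<Longrightarrow> dist x 1 < d \<Longrightarrow> hb_norm b (\<lambda>w. D x w - D1 w) < 1"
    unfolding eventually_at by auto
  obtain \<zeta>0 where \<zeta>0: "\<zeta>0 \<in> \<Omega>" "\<zeta>0 \<noteq> 1" "dist \<zeta>0 1 < d"
    using lp d(1) unfolding islimpt_approachable by blast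
  obtain C0 where C0: "C0 \<ge> 0" "hb_norm b (D \<zeta>0) \<le> ennreal C0" using fin \<zeta>0(1) \<Omega>d by blast
  have h1: "hb_norm b D1 \<le> hb_norm b (\<lambda>w. D1 w - D \<zeta>0 w) + hb_norm b (D \<zeta>0)" by (rule hb_norm_tri1)
  have h2: "hb_norm b (\<lambda>w. D1 w - D \<zeta>0 w) = hb_norm b (\<lambda>w. D \<zeta>0 w - D1 w)" by (rule hb_norm_sym)
  have h3: "hb_norm b (\<lambda>w. D \<zeta>0 w - D1 w) \<le> ennreal 1" using d(2)[OF \<zeta>0] by (simp add: less_imp_le)
  have h4: "hb_norm b (\<lambda>w. D1 w - D \<zeta>0 w) + hb_norm b (D \<zeta>0) \<le> ennreal 1 + ennreal C0"
    using h2 h3 C0(2) by (intro add_mono) simp_all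
  have D1b: "hb_norm b D1 \<le> ennreal 1 + ennreal C0" using h1 h4 by (rule order_trans)
  show ?thesis
  proof (intro exI conjI ballI impI)
    show "d > 0" by (rule d(1))
    show "0 \<le> 2 + C0" using C0 by simp
    fix \<zeta> assume \<zeta>: "\<zeta> \<in> \<Omega>" "norm (\<zeta> - 1) < d"
    have ne: "\<zeta> \<noteq> 1" using \<zeta> \<Omega>d by auto
    have g1: "hb_norm b (D \<zeta>) \<le> hb_norm b (\<lambda>w. D \<zeta> w - D1 w) + hb_norm b D1" by (rule hb_norm_tri1)
    have g2: "hb_norm b (\<lambda>w. D \<zeta> w - D1 w) \<le> ennreal 1"
      using d(2)[OF \<zeta>(1) ne] \<zeta>(2) by (simp add: dist_norm less_imp_le)
    have g3: "hb_norm b (\<lambda>w. D \<zeta> w - D1 w) + hb_norm b D1 \<le> ennreal 1 + (ennreal 1 + ennreal C0)"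
      using g2 D1b by (rule add_mono)
    have g4: "ennreal 1 + (ennreal 1 + ennreal C0) = ennreal (2 + C0)" using C0 by (simp add: ennreal_plus[symmetric])
    have "hb_norm b (D \<zeta>) \<le> ennreal (2 + C0)" using order_trans[OF g1 g3] unfolding g4 .
    then show "hb_norm b (D \<zeta>) \<le> ennreal (2 + C0)" .
  qed
qed

lemma seg_point:
  fixes z :: complex
  assumes seg: "closed_segment z 1 - {1} \<subseteq> \<Omega>" and z1: "z \<noteq> 1" and s: "0 \<le> s" "s < 1"
  shows "z + of_real s * (1 - z) \<in> \<Omega>" "norm (z + of_real s * (1 - z) - 1) \<le> norm (z - 1)"
proof -
  have "z + of_real s * (1 - z) = (1 - s) *\<^sub>R z + s *\<^sub>R 1"
    by (simp add: scaleR_conv_of_real algebra_simps)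
  then have "z + of_real s * (1 - z) \<in> closed_segment z 1"
    unfolding in_segment using s by auto
  moreover have "z + of_real s * (1 - z) \<noteq> 1"
  proof
    assume "z + of_real s * (1 - z) = 1"
    then have "(1 - of_real s) * (z - 1) = 0" by (simp add: algebra_simps)
    then have "1 - (of_real s :: complex) = 0 \<or> z - 1 = 0" by (simp only: mult_eq_0_iff)
    moreover have "1 - (of_real s :: complex) \<noteq> 0"
    proof
      assume "1 - (of_real s :: complex) = 0"
      then have "(of_real s :: complex) = of_real 1" by simp
      then have "s = 1" by (simp only: of_real_eq_iff)
      then show False using s by simp
    qed
    ultimately show False using z1 by simp
  qed
  ultimately show "z + of_real s * (1 - z) \<in> \<Omega>" using seg by auto
  have eq: "z + of_real s * (1 - z) - 1 = of_real (1 - s) * (z - 1)" by (simp add: algebra_simps)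
  have "norm (z + of_real s * (1 - z) - 1) = norm (of_real (1 - s) * (z - 1))" by (simp only: eq)
  also have "\<dots> = \<bar>1 - s\<bar> * norm (z - 1)" by (simp only: norm_mult norm_of_real)
  also have "\<dots> = (1 - s) * norm (z - 1)" using s by simp
  finally have "norm (z + of_real s * (1 - z) - 1) = (1 - s) * norm (z - 1)" .
  also have "\<dots> \<le> norm (z - 1)" using s by (simp add: mult_left_le_one_le)
  finally show "norm (z + of_real s * (1 - z) - 1) \<le> norm (z - 1)" .
qed

lemma seg_sub:
  fixes z :: complex
  assumes t: "0 \<le> t" "t < 1" and u: "u \<in> closed_segment z (z + of_real t * (1 - z))"
  shows "\<exists>s. 0 \<le> s \<and> s < 1 \<and> u = z + of_real s * (1 - z)"
proof -
  obtain v where v: "0 \<le> v" "v \<le> 1" "u = (1 - v) *\<^sub>R z + v *\<^sub>R (z + of_real t * (1 - z))"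
    using u unfolding in_segment by auto
  have "(1 - v) *\<^sub>R z + v *\<^sub>R (z + of_real t * (1 - z)) = z + of_real (v * t) * (1 - z)"
    by (simp add: scaleR_conv_of_real algebra_simps)
  with v(3) have "u = z + of_real (v * t) * (1 - z)" by simp
  moreover have vt: "v * t \<le> t" using v t by (simp add: mult_left_le_one_le)
  moreover have "0 \<le> v * t" "v * t < 1" using v t vt by auto
  ultimately show ?thesis by blast
qed

lemma Hsum_hd:
  fixes n :: nat
  assumes b_hol: "b holomorphic_on disk" and zs: "\<forall>i<n. zs i \<in> disk" and z: "z \<in> disk"
  shows "(deriv ^^ j) (\<lambda>\<zeta>. \<Sum>i<n. c i * kb b (zs i) \<zeta>) z = (\<Sum>i<n. c i * (deriv ^^ j) (kb b (zs i)) z)"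
proof -
  have "(deriv ^^ j) (\<lambda>\<zeta>. \<Sum>i<n. c i * kb b (zs i) \<zeta>) z = (\<Sum>i<n. (deriv ^^ j) (\<lambda>\<zeta>. c i * kb b (zs i) \<zeta>) z)"
    by (rule higher_deriv_sum[where S=disk]) (use zs kb_holo[OF b_hol] z in \<open>auto intro!: holomorphic_intros\<close>)
  also have "\<dots> = (\<Sum>i<n. c i * (deriv ^^ j) (kb b (zs i)) z)"
    using zs kb_holo[OF b_hol] z by (intro sum.cong refl higher_deriv_cmult[where A=disk]) auto
  finally show ?thesis .
qed

lemma main_step:
  fixes j :: nat
  assumes b_hol: "b holomorphic_on disk" and b_self: "\<forall>z\<in>disk. b z \<in> disk"
    and \<Omega>d: "\<Omega> \<subseteq> disk"
    and \<delta>0: "\<delta>0 > 0" and seg: "\<forall>z\<in>\<Omega>. norm (z - 1) < \<delta>0 \<longrightarrow> closed_segment z 1 - {1} \<subseteq> \<Omega>"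
    and \<delta>1: "\<delta>1 > 0" and B: "B \<ge> 0"
    and bnd: "\<forall>\<zeta>\<in>\<Omega>. norm (\<zeta> - 1) < \<delta>1 \<longrightarrow> hb_norm b (dk b (Suc j) \<zeta>) \<le> ennreal B"
    and pw: "\<forall>w\<in>disk. ((\<lambda>z. (deriv ^^ j) (kb b w) z) \<longlongrightarrow> cnj (dk1 b \<Omega> j w)) (at 1 within \<Omega>)"
  shows "((\<lambda>z. hb_norm b (\<lambda>w. dk b j z w - dk1 b \<Omega> j w)) \<longlongrightarrow> 0) (at 1 within \<Omega>)"
proof -
  define \<delta> where "\<delta> = min \<delta>0 \<delta>1"
  have \<delta>pos: "\<delta> > 0" unfolding \<delta>_def using \<delta>0 \<delta>1 by simp
  have est: "hb_norm b (\<lambda>w. dk b j z w - dk1 b \<Omega> j w) \<le> ennreal (B * norm (z - 1))"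
    if z: "z \<in> \<Omega>" "norm (z - 1) < \<delta>" for z
  proof (rule hb_norm_le)
    fix n c zs assume a: "adm b n c zs"
    have zs: "\<forall>i<n. zs i \<in> disk" using a unfolding adm_def by auto
    define H where "H = (\<lambda>\<zeta>. \<Sum>i<n. c i * kb b (zs i) \<zeta>)"
    have hol: "H holomorphic_on disk" unfolding H_def by (rule Hsum_holo[OF b_hol zs])
    have zd: "z \<in> disk" using z \<Omega>d by auto
    have z1: "z \<noteq> 1" using zd by auto
    have segz: "closed_segment z 1 - {1} \<subseteq> \<Omega>" using seg z \<delta>_def by auto
    define \<Lambda> where "\<Lambda> = (\<Sum>i<n. c i * cnj (dk1 b \<Omega> j (zs i)))"
    have pe: "pairing n c zs (\<lambda>w. dk b j z w - dk1 b \<Omega> j w) = cnj ((deriv ^^ j) H z - \<Lambda>)"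
      unfolding pairing_diff pairing_dk[OF b_hol zs zd] H_def \<Lambda>_def by (simp add: pairing_def)
    have limH: "((\<lambda>\<zeta>. (deriv ^^ j) H \<zeta>) \<longlongrightarrow> \<Lambda>) (at 1 within \<Omega>)"
    proof -
      have "((\<lambda>\<zeta>. \<Sum>i<n. c i * (deriv ^^ j) (kb b (zs i)) \<zeta>) \<longlongrightarrow> \<Lambda>) (at 1 within \<Omega>)"
        unfolding \<Lambda>_def using pw zs by (intro tendsto_intros) auto
      moreover have "eventually (\<lambda>\<zeta>. (\<Sum>i<n. c i * (deriv ^^ j) (kb b (zs i)) \<zeta>) = (deriv ^^ j) H \<zeta>) (at 1 within \<Omega>)"
      proof -
        have "eventually (\<lambda>\<zeta>. \<zeta> \<in> \<Omega>) (at 1 within \<Omega>)" by (simp add: eventually_at_filter)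
        then show ?thesis
          by (rule eventually_mono) (use \<Omega>d in \<open>auto simp: H_def Hsum_hd[OF b_hol zs]\<close>)
      qed
      ultimately show ?thesis by (rule Lim_transform_eventually)
    qed
    have Sprop: "u \<in> \<Omega> \<and> norm (u - 1) < \<delta>1" if t: "0 \<le> t" "t < 1" and u: "u \<in> closed_segment z (z + of_real t * (1 - z))" for t u
    proof -
      obtain s where s: "0 \<le> s" "s < 1" "u = z + of_real s * (1 - z)" using seg_sub[OF t u] by blast
      have "u \<in> \<Omega>" using seg_point(1)[OF segz z1 s(1,2)] s(3) by simp
      moreover have "norm (u - 1) \<le> norm (z - 1)" using seg_point(2)[OF segz z1 s(1,2)] s(3) by simp
      ultimately show ?thesis using z(2) \<delta>_def by auto
    qed
    have bound_t: "norm ((deriv ^^ j) H z - (deriv ^^ j) H (z + of_real t * (1 - z))) \<le> B * norm (z - 1)"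
      if t: "0 \<le> t" "t < 1" for t
    proof -
      let ?g = "z + of_real t * (1 - z)"
      let ?S = "closed_segment z ?g"
      have "norm ((deriv ^^ j) H ?g - (deriv ^^ j) H z) \<le> B * norm (?g - z)"
      proof (rule field_differentiable_bound[where S="?S" and f'="(deriv ^^ Suc j) H"])
        show "convex ?S" by simp
        fix u assume u: "u \<in> ?S"
        have ud: "u \<in> disk" using Sprop[OF t u] \<Omega>d by auto
        show "((deriv ^^ j) H has_field_derivative (deriv ^^ Suc j) H u) (at u within ?S)"
          using has_field_derivative_higher_deriv[OF hol _ ud] by (auto intro: has_field_derivative_at_within)
        have "ennreal (norm (pairing n c zs (dk b (Suc j) u))) \<le> hb_norm b (dk b (Suc j) u)" by (rule hb_norm_ge[OF a])
        also have "\<dots> \<le> ennreal B" using bnd Sprop[OF t u] by auto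
        finally have "norm (pairing n c zs (dk b (Suc j) u)) \<le> B" using B by simp
        then show "norm ((deriv ^^ Suc j) H u) \<le> B" unfolding pairing_dk[OF b_hol zs ud] H_def by simp
      qed auto
      also have "norm (?g - z) = t * norm (1 - z)" using t by (simp add: norm_mult)
      also have "B * (t * norm (1 - z)) \<le> B * norm (z - 1)"
        using t B by (intro mult_left_mono) (auto simp: norm_minus_commute mult_left_le_one_le)
      finally show ?thesis by (simp add: norm_minus_commute)
    qed
    have limg: "filterlim (\<lambda>t. z + of_real t * (1 - z)) (at 1 within \<Omega>) (at_left 1)"
    proof (rule filterlim_at_withinI)
      have "((\<lambda>t. z + of_real t * (1 - z)) \<longlongrightarrow> z + of_real 1 * (1 - z)) (at_left (1::real))"
        by (intro tendsto_intros)
      then show "filterlim (\<lambda>t. z + of_real t * (1 - z)) (nhds 1) (at_left 1)" by simp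
      have ev01: "eventually (\<lambda>t. t \<in> {0<..<1}) (at_left (1::real))" by (rule eventually_at_left_real) simp
      then show "eventually (\<lambda>t. z + of_real t * (1 - z) \<in> \<Omega> - {1}) (at_left 1)"
      proof (rule eventually_mono)
        fix t :: real assume t: "t \<in> {0<..<1}"
        have "z + of_real t * (1 - z) \<in> \<Omega>" using seg_point(1)[OF segz z1, of t] t by simp
        then show "z + of_real t * (1 - z) \<in> \<Omega> - {1}" using \<Omega>d by auto
      qed
    qed
    have l1: "((\<lambda>t. (deriv ^^ j) H (z + of_real t * (1 - z))) \<longlongrightarrow> \<Lambda>) (at_left 1)"
      using filterlim_compose[OF limH limg] .
    have "((\<lambda>t. norm ((deriv ^^ j) H z - (deriv ^^ j) H (z + of_real t * (1 - z)))) \<longlongrightarrow> norm ((deriv ^^ j) H z - \<Lambda>)) (at_left 1)"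
      by (intro tendsto_norm tendsto_diff tendsto_const l1)
    then have "norm ((deriv ^^ j) H z - \<Lambda>) \<le> B * norm (z - 1)"
    proof (rule tendsto_upperbound)
      show "eventually (\<lambda>t. norm ((deriv ^^ j) H z - (deriv ^^ j) H (z + of_real t * (1 - z))) \<le> B * norm (z - 1)) (at_left 1)"
        using eventually_at_left_real[of 0 1] by (rule eventually_mono) (auto intro: bound_t)
    qed simp
    then show "norm (pairing n c zs (\<lambda>w. dk b j z w - dk1 b \<Omega> j w)) \<le> B * norm (z - 1)"
      unfolding pe complex_mod_cnj .
  qed
  have ev: "eventually (\<lambda>z. hb_norm b (\<lambda>w. dk b j z w - dk1 b \<Omega> j w) \<le> ennreal (B * norm (z - 1))) (at 1 within \<Omega>)"
    unfolding eventually_at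
  proof (rule exI[of _ \<delta>], intro conjI ballI impI)
    show "\<delta> > 0" by (rule \<delta>pos)
    fix x assume "x \<in> \<Omega>" "x \<noteq> 1 \<and> dist x 1 < \<delta>"
    then show "hb_norm b (\<lambda>w. dk b j x w - dk1 b \<Omega> j w) \<le> ennreal (B * norm (x - 1))"
      by (intro est) (simp_all add: dist_norm)
  qed
  have lim0: "((\<lambda>z. ennreal (B * norm (z - 1))) \<longlongrightarrow> 0) (at 1 within \<Omega>)"
  proof -
    have i: "((\<lambda>z. z) \<longlongrightarrow> (1::complex)) (at 1 within \<Omega>)" by (rule tendsto_ident_at)
    have "((\<lambda>z. B * norm (z - 1)) \<longlongrightarrow> B * norm ((1::complex) - 1)) (at 1 within \<Omega>)"
      by (intro tendsto_mult tendsto_const tendsto_norm tendsto_diff i)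
    then have "((\<lambda>z. ennreal (B * norm (z - 1))) \<longlongrightarrow> ennreal (B * norm ((1::complex) - 1))) (at 1 within \<Omega>)" by (rule tendsto_ennrealI)
    then show ?thesis by simp
  qed
  have ev0: "eventually (\<lambda>z. 0 \<le> hb_norm b (\<lambda>w. dk b j z w - dk1 b \<Omega> j w)) (at 1 within \<Omega>)" by simp
  show ?thesis by (rule tendsto_sandwich[OF ev0 ev tendsto_const lim0])
qed

lemma eval_single:
  assumes b_self: "\<forall>z\<in>disk. b z \<in> disk" and w: "w \<in> disk"
  shows "ennreal (norm (f w) / sqrt ((1 - (norm (b w))^2) / (1 - (norm w)^2))) \<le> hb_norm b f"
proof -
  define K where "K = (1 - (norm (b w))^2) / (1 - (norm w)^2)"
  have bw: "b w \<in> disk" using b_self w by auto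
  have K0: "0 < K" unfolding K_def by (rule kb_diag_pos[of w b, OF w bw])
  have kk: "kb b w w = of_real K" unfolding K_def by (rule kb_diag[of w b, OF w bw])
  define c where "c = (\<lambda>_::nat. complex_of_real (1 / sqrt K))"
  have a: "adm b 1 c (\<lambda>_. w)"
  proof -
    have "c 0 * cnj (c 0) * kb b w w = of_real ((1 / sqrt K) * (1 / sqrt K) * K)"
      by (simp only: c_def kk complex_cnj_complex_of_real of_real_mult)
    also have "(1 / sqrt K) * (1 / sqrt K) * K = 1" using K0 by (simp add: field_simps)
    finally show ?thesis unfolding adm_def using w by simp
  qed
  have "norm (pairing 1 c (\<lambda>_. w) f) = norm (f w) / sqrt K"
    unfolding pairing_def c_def using K0 by (simp add: norm_mult norm_divide)
  then show ?thesis using hb_norm_ge[OF a, of f] unfolding K_def by simp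
qed

lemma pw_top:
  assumes b_self: "\<forall>z\<in>disk. b z \<in> disk"
    and conv: "((\<lambda>z. hb_norm b (\<lambda>w. dk b m z w - dk1 b \<Omega> m w)) \<longlongrightarrow> 0) (at 1 within \<Omega>)"
  shows "\<forall>w\<in>disk. ((\<lambda>z. (deriv ^^ m) (kb b w) z) \<longlongrightarrow> cnj (dk1 b \<Omega> m w)) (at 1 within \<Omega>)"
proof
  fix w assume w: "w \<in> disk"
  define s where "s = sqrt ((1 - (norm (b w))^2) / (1 - (norm w)^2))"
  have bw: "b w \<in> disk" using b_self w by auto
  have s0: "0 < s" unfolding s_def using kb_diag_pos[of w b, OF w bw] by simp
  show "((\<lambda>z. (deriv ^^ m) (kb b w) z) \<longlongrightarrow> cnj (dk1 b \<Omega> m w)) (at 1 within \<Omega>)"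
    unfolding tendsto_iff
  proof (intro allI impI)
    fix \<epsilon> :: real assume e: "\<epsilon> > 0"
    have "0 < ennreal (\<epsilon> / s)" using e s0 by simp
    then have "eventually (\<lambda>z. hb_norm b (\<lambda>w. dk b m z w - dk1 b \<Omega> m w) < ennreal (\<epsilon> / s)) (at 1 within \<Omega>)"
      using order_tendstoD(2)[OF conv] by blast
    then show "eventually (\<lambda>z. dist ((deriv ^^ m) (kb b w) z) (cnj (dk1 b \<Omega> m w)) < \<epsilon>) (at 1 within \<Omega>)"
    proof (rule eventually_mono)
      fix z assume h: "hb_norm b (\<lambda>w. dk b m z w - dk1 b \<Omega> m w) < ennreal (\<epsilon> / s)"
      have "ennreal (norm (dk b m z w - dk1 b \<Omega> m w) / s) < ennreal (\<epsilon> / s)"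
        using eval_single[OF b_self w, of "\<lambda>w. dk b m z w - dk1 b \<Omega> m w"] h unfolding s_def by simp
      then have "norm (dk b m z w - dk1 b \<Omega> m w) / s < \<epsilon> / s"
        using s0 e by (subst (asm) ennreal_less_iff) auto
      then have "norm (dk b m z w - dk1 b \<Omega> m w) < \<epsilon>" using s0 by (simp add: divide_strict_right_mono_neg field_simps)
      moreover have "norm (dk b m z w - dk1 b \<Omega> m w) = dist ((deriv ^^ m) (kb b w) z) (cnj (dk1 b \<Omega> m w))"
      proof -
        have "dk b m z w - dk1 b \<Omega> m w = cnj ((deriv ^^ m) (kb b w) z - cnj (dk1 b \<Omega> m w))"
          unfolding dk_eq by simp
        then show ?thesis by (simp only: dist_norm complex_mod_cnj)
      qed
      ultimately show "dist ((deriv ^^ m) (kb b w) z) (cnj (dk1 b \<Omega> m w)) < \<epsilon>" by simp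
    qed
  qed
qed

lemma pw_all:
  assumes b_hol: "b holomorphic_on disk" and \<Omega>d: "\<Omega> \<subseteq> disk" and lp: "1 islimpt \<Omega>"
    and db: "\<forall>i\<le>m. \<exists>L. ((\<lambda>z. (deriv ^^ i) b z) \<longlongrightarrow> L) (at 1 within \<Omega>)"
    and j: "j \<le> m" and w: "w \<in> disk"
  shows "((\<lambda>z. (deriv ^^ j) (kb b w) z) \<longlongrightarrow> cnj (dk1 b \<Omega> j w)) (at 1 within \<Omega>)"
proof -
  obtain Lb where Lb: "\<forall>i\<le>m. ((\<lambda>z. (deriv ^^ i) b z) \<longlongrightarrow> Lb i) (at 1 within \<Omega>)" using db by metis
  have x1: "1 - cnj w * 1 \<noteq> 0"
  proof
    assume "1 - cnj w * 1 = 0"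
    then have "cnj w = 1" by simp
    then have "norm w = 1" by (metis complex_mod_cnj norm_one)
    with w show False by simp
  qed
  have i: "((\<lambda>z. z) \<longlongrightarrow> (1::complex)) (at 1 within \<Omega>)" by (rule tendsto_ident_at)
  have Ef_lim: "((\<lambda>z. Ef (cnj w) r z) \<longlongrightarrow> Ef (cnj w) r 1) (at 1 within \<Omega>)" for r
    unfolding Ef_def using x1 by (intro tendsto_intros i) auto
  define L where "L = Ef (cnj w) j 1 - cnj (b w) * (\<Sum>i = 0..j. of_nat (j choose i) * Lb i * Ef (cnj w) (j - i) 1)"
  have "((\<lambda>z. Ef (cnj w) j z - cnj (b w) * (\<Sum>i = 0..j. of_nat (j choose i) * (deriv ^^ i) b z * Ef (cnj w) (j - i) z)) \<longlongrightarrow> L) (at 1 within \<Omega>)"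
    unfolding L_def using Lb j by (intro tendsto_intros Ef_lim) auto
  moreover have "eventually (\<lambda>z. Ef (cnj w) j z - cnj (b w) * (\<Sum>i = 0..j. of_nat (j choose i) * (deriv ^^ i) b z * Ef (cnj w) (j - i) z) = (deriv ^^ j) (kb b w) z) (at 1 within \<Omega>)"
  proof -
    have "eventually (\<lambda>\<zeta>. \<zeta> \<in> \<Omega>) (at 1 within \<Omega>)" by (simp add: eventually_at_filter)
    then show ?thesis by (rule eventually_mono) (use \<Omega>d kb_hd[OF b_hol w] in auto)
  qed
  ultimately have lim: "((\<lambda>z. (deriv ^^ j) (kb b w) z) \<longlongrightarrow> L) (at 1 within \<Omega>)" by (rule Lim_transform_eventually)
  have "((\<lambda>z. dk b j z w) \<longlongrightarrow> cnj L) (at 1 within \<Omega>)" unfolding dk_eq by (intro tendsto_cnj lim)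
  moreover have "\<not> trivial_limit (at 1 within \<Omega>)" using lp by (simp add: trivial_limit_within)
  ultimately have "dk1 b \<Omega> j w = cnj L" unfolding dk1_def by (simp add: tendsto_Lim)
  then show ?thesis using lim by simp
qed

theorem mainTheorem9:
  fixes b :: "complex \<Rightarrow> complex" and N :: enat and a :: "nat \<Rightarrow> complex"
    and \<nu> :: "complex measure" and \<Omega> :: "complex set" and m :: nat
  assumes b_hol: "b holomorphic_on disk"
    and b_self: "\<forall>z\<in>disk. b z \<in> disk"
    and b_nonzero: "\<exists>z\<in>disk. b z \<noteq> 0"
    and zeros: "is_zero_seq b N a"
    and sing: "is_sing_inner_factor b N a \<nu>"
    and region: "approach_region \<Omega>"
    and bound: "(SUP z\<in>\<Omega>.
        (\<Sum>n. if enat n < N then ennreal ((1 - (norm (a n))\<^sup>2) / (norm (1 - cnj (a n) * z)) ^ (2*m+2)) else 0)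
      + (\<integral>\<^sup>+\<zeta>. ennreal (1 / (norm (1 - cnj \<zeta> * z)) ^ (2*m+2)) \<partial>\<nu>)
      + (\<integral>\<^sup>+\<zeta>. ennreal (- ln (norm (bdry b \<zeta>)) / (norm (1 - cnj \<zeta> * z)) ^ (2*m+2)) \<partial>circle_meas))
      < \<infinity>"
    and conv_m: "((\<lambda>z. hb_norm b (\<lambda>w. dk b m z w - dk1 b \<Omega> m w)) \<longlongrightarrow> 0) (at 1 within \<Omega>)"
  shows "\<forall>j<m. ((\<lambda>z. hb_norm b (\<lambda>w. dk b j z w - dk1 b \<Omega> j w)) \<longlongrightarrow> 0) (at 1 within \<Omega>)"
proof -
  have \<Omega>d: "\<Omega> \<subseteq> disk" and fr: "frontier \<Omega> \<inter> sphere 0 1 = {1}"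
    and segex: "\<exists>\<delta>>0. \<forall>z\<in>\<Omega>. norm (z - 1) < \<delta> \<longrightarrow> closed_segment z 1 - {1} \<subseteq> \<Omega>"
    using region unfolding approach_region_def by auto
  obtain \<delta>0 where \<delta>0: "\<delta>0 > 0" "\<forall>z\<in>\<Omega>. norm (z - 1) < \<delta>0 \<longrightarrow> closed_segment z 1 - {1} \<subseteq> \<Omega>"
    using segex by auto
  have "1 \<in> frontier \<Omega>" using fr by auto
  then have "1 \<in> closure \<Omega>" by (simp add: frontier_def)
  moreover have "1 \<notin> \<Omega>" using \<Omega>d by auto
  ultimately have lp: "1 islimpt \<Omega>" by (simp add: closure_def)
  have ev: "eventually (\<lambda>z. z \<in> disk) (at 1 within \<Omega>)"
  proof -
    have "eventually (\<lambda>\<zeta>. \<zeta> \<in> \<Omega>) (at 1 within \<Omega>)" by (simp add: eventually_at_filter)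
    then show ?thesis by (rule eventually_mono) (use \<Omega>d in auto)
  qed
  have pwm: "\<forall>w\<in>disk. ((\<lambda>z. (deriv ^^ m) (kb b w) z) \<longlongrightarrow> cnj (dk1 b \<Omega> m w)) (at 1 within \<Omega>)"
    by (rule pw_top[OF b_self conv_m])
  have db: "\<forall>i\<le>m. \<exists>L. ((\<lambda>z. (deriv ^^ i) b z) \<longlongrightarrow> L) (at 1 within \<Omega>)"
    by (rule deriv_b_conv[OF b_hol b_nonzero ev tendsto_ident_at]) (use pwm in blast)
  have fin: "\<forall>\<zeta>\<in>disk. \<exists>C\<ge>0. hb_norm b (dk b k \<zeta>) \<le> ennreal C" for k
    using lemmaA[OF b_hol b_self] by blast
  define Good where "Good k \<longleftrightarrow> (\<exists>\<delta>>0. \<exists>B\<ge>0. \<forall>\<zeta>\<in>\<Omega>. norm (\<zeta> - 1) < \<delta> \<longrightarrow> hb_norm b (dk b k \<zeta>) \<le> ennreal B)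
      \<and> ((\<lambda>z. hb_norm b (\<lambda>w. dk b k z w - dk1 b \<Omega> k w)) \<longlongrightarrow> 0) (at 1 within \<Omega>)" for k
  have G: "Good (m - k)" if "k \<le> m" for k
    using that
  proof (induction k)
    case 0
    have "\<exists>\<delta>>0. \<exists>B\<ge>0. \<forall>\<zeta>\<in>\<Omega>. norm (\<zeta> - 1) < \<delta> \<longrightarrow> hb_norm b (dk b m \<zeta>) \<le> ennreal B"
      by (rule conv_to_bound[OF \<Omega>d lp conv_m fin])
    then show ?case using conv_m unfolding Good_def by simp
  next
    case (Suc k)
    define j where "j = m - Suc k"
    have jm: "j < m" "Suc j = m - k" "j \<le> m" unfolding j_def using Suc.prems by auto
    have "Good (Suc j)" using Suc.IH Suc.prems jm(2) by simp
    then obtain \<delta>1 B where \<delta>1: "\<delta>1 > 0" "B \<ge> 0"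
      "\<forall>\<zeta>\<in>\<Omega>. norm (\<zeta> - 1) < \<delta>1 \<longrightarrow> hb_norm b (dk b (Suc j) \<zeta>) \<le> ennreal B"
      unfolding Good_def by blast
    have pwj: "\<forall>w\<in>disk. ((\<lambda>z. (deriv ^^ j) (kb b w) z) \<longlongrightarrow> cnj (dk1 b \<Omega> j w)) (at 1 within \<Omega>)"
      using pw_all[OF b_hol \<Omega>d lp db jm(3)] by blast
    have cj: "((\<lambda>z. hb_norm b (\<lambda>w. dk b j z w - dk1 b \<Omega> j w)) \<longlongrightarrow> 0) (at 1 within \<Omega>)"
      by (rule main_step[OF b_hol b_self \<Omega>d \<delta>0 \<delta>1 pwj])
    have "\<exists>\<delta>>0. \<exists>B\<ge>0. \<forall>\<zeta>\<in>\<Omega>. norm (\<zeta> - 1) < \<delta> \<longrightarrow> hb_norm b (dk b j \<zeta>) \<le> ennreal B"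
      by (rule conv_to_bound[OF \<Omega>d lp cj fin])
    then show ?case using cj unfolding Good_def j_def by simp
  qed
  show ?thesis
  proof (intro allI impI)
    fix j assume j: "j < m"
    have "Good (m - (m - j))" by (rule G) simp
    then show "((\<lambda>z. hb_norm b (\<lambda>w. dk b j z w - dk1 b \<Omega> j w)) \<longlongrightarrow> 0) (at 1 within \<Omega>)"
      unfolding Good_def using j by simp
  qed
qed

end
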